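(* Let $\Lambda=k(\Gamma,\mathcal{A})$ be a generalized path algebra without relations. Let $i\in\Gamma_0$, $1\le j\le s_i$, and let $((M_l)_{l\in\Gamma_0},(\phi_\alpha)_{\alpha\in\Gamma_1})$ be the representation of the indecomposable injective $I(i,j)=D(\Lambda\overline{e_{ij}})$. Then: - $M_i=I_i^j=D(A_ie_{ij})$; - for $l\ne i$, $M_l\cong(D A_l)^{n_l}$ as $A_l$-modules, where $$n_l=\sum_{\gamma:\,l=i_0\to i_1\to\cdots\to i_r=i}(\dim_kA_{i_1})\cdots(\dim_kA_{i_{r-1}})(\dim_kI_i^j),$$ summed over all paths $\gamma$ from $l$ to $i$ in $\Gamma$. In particular $M_l=0$ if there is no path from $l$ to $i$.
   Context: $k$ is an algebraically closed field, $\Gamma$ a finite acyclic quiver, and $\mathcal{A}=\{A_i:i\in\Gamma_0\}$ finite-dimensional basic $k$-algebras. The generalized path algebra $k(\Gamma,\mathcal{A})$ is spanned by $\mathcal{A}$-paths $a_1\beta_1\cdots a_n\beta_na_{n+1}$ ($\beta_1\cdots\beta_n$ a path of $\Gamma$, $a_i\in A_{s(\beta_i)}$, $a_{n+1}\in A_{e(\beta_n)}$), modulo multilinearity, with concatenation product (multiplying adjacent algebra entries, or $0$ if paths don't compose). For each $i$, $\{e_{i1},\dots,e_{is_i}\}$ is a complete set of primitive pairwise orthogonal idempotents of $A_i$, and $\overline{e_{ij}}$ is the class of $e_{ij}$ in $\Lambda$. $D=\operatorname{Hom}_k(-,k)$. The representation of a right $\Lambda$-module $X$ has $X_l=X\cdot1_l$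 ($1_l$ the identity of $A_l$) and $\phi_\alpha(x)=x\alpha$. *)

theory Defs
  imports "HOL-Library.Function_Algebras" "HOL-Computational_Algebra.Polynomial"
begin

definition alg_closed :: "'k::field itself \<Rightarrow> bool" where
  "alg_closed _ \<longleftrightarrow> (\<forall>p::'k poly. degree p \<ge> 1 \<longrightarrow> (\<exists>x. poly p x = 0))"

text \<open>A k-algebra of dimension n is k^n (functions nat => k vanishing from n on),
  with a bilinear associative unital multiplication.\<close>

definition vecs :: "nat \<Rightarrow> (nat \<Rightarrow> 'k::zero) set" where
  "vecs n = {x. \<forall>m\<ge>n. x m = 0}"

definition sc :: "'k::times \<Rightarrow> ('x \<Rightarrow> 'k) \<Rightarrow> ('x \<Rightarrow> 'k)" where
  "sc c x = (\<lambda>w. c * x w)"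

definition delta :: "nat \<Rightarrow> nat \<Rightarrow> 'k::{zero,one}" where
  "delta n = (\<lambda>m. if m = n then 1 else 0)"

definition fd_alg :: "nat \<Rightarrow> ((nat \<Rightarrow> 'k::field) \<Rightarrow> (nat \<Rightarrow> 'k) \<Rightarrow> (nat \<Rightarrow> 'k)) \<Rightarrow> (nat \<Rightarrow> 'k) \<Rightarrow> bool" where
  "fd_alg n mul one \<longleftrightarrow> one \<in> vecs n \<and>
     (\<forall>a\<in>vecs n. \<forall>b\<in>vecs n. mul a b \<in> vecs n) \<and>
     (\<forall>a\<in>vecs n. \<forall>b\<in>vecs n. \<forall>c\<in>vecs n.
        mul (a + b) c = mul a c + mul b c \<and> mul a (b + c) = mul a b + mul a c \<and>
        mul (mul a b) c = mul a (mul b c)) \<and>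
     (\<forall>k. \<forall>a\<in>vecs n. \<forall>b\<in>vecs n. mul (sc k a) b = sc k (mul a b) \<and> mul a (sc k b) = sc k (mul a b)) \<and>
     (\<forall>a\<in>vecs n. mul one a = a \<and> mul a one = a)"

definition idem :: "nat \<Rightarrow> ((nat \<Rightarrow> 'k::field) \<Rightarrow> (nat \<Rightarrow> 'k) \<Rightarrow> (nat \<Rightarrow> 'k)) \<Rightarrow> (nat \<Rightarrow> 'k) \<Rightarrow> bool" where
  "idem n mul e \<longleftrightarrow> e \<in> vecs n \<and> mul e e = e"

definition prim_idem :: "nat \<Rightarrow> ((nat \<Rightarrow> 'k::field) \<Rightarrow> (nat \<Rightarrow> 'k) \<Rightarrow> (nat \<Rightarrow> 'k)) \<Rightarrow> (nat \<Rightarrow> 'k) \<Rightarrow> bool" where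
  "prim_idem n mul e \<longleftrightarrow> idem n mul e \<and> e \<noteq> 0 \<and>
     \<not> (\<exists>e1 e2. idem n mul e1 \<and> idem n mul e2 \<and> e1 \<noteq> 0 \<and> e2 \<noteq> 0 \<and>
           mul e1 e2 = 0 \<and> mul e2 e1 = 0 \<and> e = e1 + e2)"

definition complete_prim_orth ::
  "nat \<Rightarrow> ((nat \<Rightarrow> 'k::field) \<Rightarrow> (nat \<Rightarrow> 'k) \<Rightarrow> (nat \<Rightarrow> 'k)) \<Rightarrow> (nat \<Rightarrow> 'k) \<Rightarrow> nat \<Rightarrow> (nat \<Rightarrow> nat \<Rightarrow> 'k) \<Rightarrow> bool" where
  "complete_prim_orth n mul one s e \<longleftrightarrow>
     (\<forall>j\<in>{1..s}. prim_idem n mul (e j)) \<and>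
     (\<forall>j\<in>{1..s}. \<forall>j'\<in>{1..s}. j \<noteq> j' \<longrightarrow> mul (e j) (e j') = 0) \<and>
     (\<Sum>j=1..s. e j) = one"

definition rmod_iso ::
  "'a set \<Rightarrow> 'm::plus set \<Rightarrow> ('m \<Rightarrow> 'a \<Rightarrow> 'm) \<Rightarrow> ('k \<Rightarrow> 'm \<Rightarrow> 'm)
     \<Rightarrow> 'n::plus set \<Rightarrow> ('n \<Rightarrow> 'a \<Rightarrow> 'n) \<Rightarrow> ('k \<Rightarrow> 'n \<Rightarrow> 'n) \<Rightarrow> bool" where
  "rmod_iso A M actM smM N actN smN \<longleftrightarrow>
     (\<exists>F. bij_betw F M N \<and>
          (\<forall>x\<in>M. \<forall>y\<in>M. F (x + y) = F x + F y) \<and>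
          (\<forall>c. \<forall>x\<in>M. F (smM c x) = smN c (F x)) \<and>
          (\<forall>x\<in>M. \<forall>a\<in>A. F (actM x a) = actN (F x) a))"

definition basic_alg ::
  "nat \<Rightarrow> ((nat \<Rightarrow> 'k::field) \<Rightarrow> (nat \<Rightarrow> 'k) \<Rightarrow> (nat \<Rightarrow> 'k)) \<Rightarrow> nat \<Rightarrow> (nat \<Rightarrow> nat \<Rightarrow> 'k) \<Rightarrow> bool" where
  "basic_alg n mul s e \<longleftrightarrow>
     (\<forall>j\<in>{1..s}. \<forall>j'\<in>{1..s}. j \<noteq> j' \<longrightarrow>
        \<not> rmod_iso (vecs n) ((\<lambda>a. mul (e j) a) ` vecs n) mul sc
                            ((\<lambda>a. mul (e j') a) ` vecs n) mul sc)"

definition dual :: "('x \<Rightarrow> 'k::field) set \<Rightarrow> (('x \<Rightarrow> 'k) \<Rightarrow> 'k) set" where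
  "dual S = {\<phi>. (\<forall>x\<in>S. \<forall>y\<in>S. \<phi> (x + y) = \<phi> x + \<phi> y) \<and>
               (\<forall>c. \<forall>x\<in>S. \<phi> (sc c x) = c * \<phi> x) \<and> (\<forall>x. x \<notin> S \<longrightarrow> \<phi> x = 0)}"

definition dact :: "('x \<Rightarrow> 'k::field) set \<Rightarrow> ('a \<Rightarrow> ('x \<Rightarrow> 'k) \<Rightarrow> ('x \<Rightarrow> 'k))
                    \<Rightarrow> (('x \<Rightarrow> 'k) \<Rightarrow> 'k) \<Rightarrow> 'a \<Rightarrow> (('x \<Rightarrow> 'k) \<Rightarrow> 'k)" where
  "dact S L \<phi> a = (\<lambda>x. if x \<in> S then \<phi> (L a x) else 0)"

definition kspan :: "('x \<Rightarrow> 'k::field) list \<Rightarrow> ('x \<Rightarrow> 'k) set" where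
  "kspan vs = {(\<Sum>m<length vs. sc (c m) (vs ! m)) | c. True}"

definition dimk :: "('x \<Rightarrow> 'k::field) set \<Rightarrow> nat" where
  "dimk S = (LEAST n. \<exists>vs. length vs = n \<and> set vs \<subseteq> S \<and> kspan vs = S)"

text \<open>\<open>(D A)^N\<close> for the algebra \<open>A = k^n\<close>: N-tuples of functionals, with componentwise action.\<close>
definition dpow :: "nat \<Rightarrow> nat \<Rightarrow> (nat \<Rightarrow> (nat \<Rightarrow> 'k::field) \<Rightarrow> 'k) set" where
  "dpow n N = {\<Phi>. (\<forall>m<N. \<Phi> m \<in> dual (vecs n)) \<and> (\<forall>m\<ge>N. \<Phi> m = 0)}"

definition dpow_act :: "nat \<Rightarrow> nat \<Rightarrow> ((nat \<Rightarrow> 'k::field) \<Rightarrow> (nat \<Rightarrow> 'k) \<Rightarrow> (nat \<Rightarrow> 'k))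
     \<Rightarrow> (nat \<Rightarrow> (nat \<Rightarrow> 'k) \<Rightarrow> 'k) \<Rightarrow> (nat \<Rightarrow> 'k) \<Rightarrow> (nat \<Rightarrow> (nat \<Rightarrow> 'k) \<Rightarrow> 'k)" where
  "dpow_act n N mul \<Phi> a = (\<lambda>m. if m < N then dact (vecs n) mul (\<Phi> m) a else 0)"

definition dpow_sc :: "'k::field \<Rightarrow> (nat \<Rightarrow> (nat \<Rightarrow> 'k) \<Rightarrow> 'k) \<Rightarrow> (nat \<Rightarrow> (nat \<Rightarrow> 'k) \<Rightarrow> 'k)" where
  "dpow_sc c \<Phi> = (\<lambda>m. sc c (\<Phi> m))"

text \<open>A path from \<open>v\<close> is a list of composable arrows starting at \<open>v\<close> ([] = trivial path at v).\<close>

definition qpath :: "nat set \<Rightarrow> nat set \<Rightarrow> (nat \<Rightarrow> nat) \<Rightarrow> (nat \<Rightarrow> nat) \<Rightarrow> nat \<Rightarrow> nat list \<Rightarrow> bool" where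
  "qpath V E src tgt v as \<longleftrightarrow> v \<in> V \<and> set as \<subseteq> E \<and> (as \<noteq> [] \<longrightarrow> src (hd as) = v) \<and>
     (\<forall>m. Suc m < length as \<longrightarrow> tgt (as ! m) = src (as ! Suc m))"

definition pvert :: "(nat \<Rightarrow> nat) \<Rightarrow> nat \<Rightarrow> nat list \<Rightarrow> nat \<Rightarrow> nat" where
  "pvert tgt v as m = (if m = 0 then v else tgt (as ! (m - 1)))"

definition pend :: "(nat \<Rightarrow> nat) \<Rightarrow> nat \<Rightarrow> nat list \<Rightarrow> nat" where
  "pend tgt v as = pvert tgt v as (length as)"

definition quiver :: "nat set \<Rightarrow> nat set \<Rightarrow> (nat \<Rightarrow> nat) \<Rightarrow> (nat \<Rightarrow> nat) \<Rightarrow> bool" where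
  "quiver V E src tgt \<longleftrightarrow> finite V \<and> finite E \<and> (\<forall>\<alpha>\<in>E. src \<alpha> \<in> V \<and> tgt \<alpha> \<in> V)"

definition acyclic_quiver :: "nat set \<Rightarrow> nat set \<Rightarrow> (nat \<Rightarrow> nat) \<Rightarrow> (nat \<Rightarrow> nat) \<Rightarrow> bool" where
  "acyclic_quiver V E src tgt \<longleftrightarrow> (\<forall>v as. qpath V E src tgt v as \<and> as \<noteq> [] \<longrightarrow> pend tgt v as \<noteq> v)"

text \<open>Each \<open>A_v\<close> is \<open>k^(d v)\<close> with multiplication \<open>mul v\<close>. The space spanned by
  \<open>A\<close>-paths modulo multilinearity is the direct sum over paths \<open>v_0 -> ... -> v_n\<close> of
  \<open>A_{v_0} \<otimes> ... \<otimes> A_{v_n}\<close>; a basis is given by words \<open>(v, as, is)\<close>: a path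
  \<open>as\<close> from \<open>v\<close> together with basis indices \<open>is ! m < d (m-th vertex)\<close>.\<close>

definition gwords :: "nat set \<Rightarrow> nat set \<Rightarrow> (nat \<Rightarrow> nat) \<Rightarrow> (nat \<Rightarrow> nat) \<Rightarrow> (nat \<Rightarrow> nat)
    \<Rightarrow> (nat \<times> nat list \<times> nat list) set" where
  "gwords V E src tgt d = {(v, as, is). qpath V E src tgt v as \<and> length is = Suc (length as) \<and>
       (\<forall>m < length is. is ! m < d (pvert tgt v as m))}"

text \<open>Elements of \<open>\<Lambda>\<close>: coefficient functions supported on basis words.\<close>
definition gpa :: "nat set \<Rightarrow> nat set \<Rightarrow> (nat \<Rightarrow> nat) \<Rightarrow> (nat \<Rightarrow> nat) \<Rightarrow> (nat \<Rightarrow> nat)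
    \<Rightarrow> ((nat \<times> nat list \<times> nat list) \<Rightarrow> 'k::zero) set" where
  "gpa V E src tgt d = {f. \<forall>w. w \<notin> gwords V E src tgt d \<longrightarrow> f w = 0}"

text \<open>Coefficient of basis word \<open>w\<close> in the product of basis words \<open>u\<close> and \<open>u'\<close>
  (concatenate, multiplying the adjacent entries in \<open>A_{end u}\<close>; 0 if not composable).\<close>
definition bcoef :: "(nat \<Rightarrow> nat) \<Rightarrow> (nat \<Rightarrow> (nat \<Rightarrow> 'k::field) \<Rightarrow> (nat \<Rightarrow> 'k) \<Rightarrow> (nat \<Rightarrow> 'k))
    \<Rightarrow> (nat \<times> nat list \<times> nat list) \<Rightarrow> (nat \<times> nat list \<times> nat list) \<Rightarrow> (nat \<times> nat list \<times> nat list) \<Rightarrow> 'k" where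
  "bcoef tgt mul u u' w = (case u of (v, as, is) \<Rightarrow> case u' of (v', as', is') \<Rightarrow> case w of (v'', bs, js) \<Rightarrow>
      if pend tgt v as = v' \<and> v'' = v \<and> bs = as @ as' \<and> length js = length is + length is' - 1 \<and>
         take (length as) js = take (length as) is \<and> drop (Suc (length as)) js = tl is'
      then mul v' (delta (last is)) (delta (hd is')) (js ! length as) else 0)"

definition gpa_mult :: "nat set \<Rightarrow> nat set \<Rightarrow> (nat \<Rightarrow> nat) \<Rightarrow> (nat \<Rightarrow> nat) \<Rightarrow> (nat \<Rightarrow> nat)
    \<Rightarrow> (nat \<Rightarrow> (nat \<Rightarrow> 'k::field) \<Rightarrow> (nat \<Rightarrow> 'k) \<Rightarrow> (nat \<Rightarrow> 'k))
    \<Rightarrow> ((nat \<times> nat list \<times> nat list) \<Rightarrow> 'k) \<Rightarrow> ((nat \<times> nat list \<times> nat list) \<Rightarrow> 'k)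
    \<Rightarrow> ((nat \<times> nat list \<times> nat list) \<Rightarrow> 'k)" where
  "gpa_mult V E src tgt d mul f g = (\<lambda>w. if w \<in> gwords V E src tgt d then
      (\<Sum>u\<in>gwords V E src tgt d. \<Sum>u'\<in>gwords V E src tgt d. f u * g u' * bcoef tgt mul u u' w)
      else 0)"

text \<open>The class in \<open>\<Lambda>\<close> of an element \<open>a \<in> A_v\<close> (trivial \<open>A\<close>-path at \<open>v\<close>).\<close>
definition gincl :: "(nat \<Rightarrow> nat) \<Rightarrow> nat \<Rightarrow> (nat \<Rightarrow> 'k::zero) \<Rightarrow> ((nat \<times> nat list \<times> nat list) \<Rightarrow> 'k)" where
  "gincl d v a = (\<lambda>(v', as, is). if v' = v \<and> as = [] \<and> length is = 1 \<and> hd is < d v then a (hd is) else 0)"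

definition gpa_proj :: "nat set \<Rightarrow> nat set \<Rightarrow> (nat \<Rightarrow> nat) \<Rightarrow> (nat \<Rightarrow> nat) \<Rightarrow> (nat \<Rightarrow> nat)
    \<Rightarrow> (nat \<Rightarrow> (nat \<Rightarrow> 'k::field) \<Rightarrow> (nat \<Rightarrow> 'k) \<Rightarrow> (nat \<Rightarrow> 'k)) \<Rightarrow> nat \<Rightarrow> (nat \<Rightarrow> 'k)
    \<Rightarrow> ((nat \<times> nat list \<times> nat list) \<Rightarrow> 'k) set" where
  "gpa_proj V E src tgt d mul i e =
     (\<lambda>f. gpa_mult V E src tgt d mul f (gincl d i e)) ` gpa V E src tgt d"

text \<open>Right \<open>\<Lambda>\<close>-action on \<open>I = D(\<Lambda> e)\<close>.\<close>
definition inj_act where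
  "inj_act V E src tgt d mul i e = dact (gpa_proj V E src tgt d mul i e) (gpa_mult V E src tgt d mul)"

text \<open>\<open>M_l = I \<cdot> 1_l\<close>.\<close>
definition rep_space where
  "rep_space V E src tgt d mul one i e l =
     (\<lambda>\<phi>. inj_act V E src tgt d mul i e \<phi> (gincl d l (one l))) ` dual (gpa_proj V E src tgt d mul i e)"

definition rep_act where
  "rep_act V E src tgt d mul i e l = (\<lambda>x a. inj_act V E src tgt d mul i e x (gincl d l a))"

definition left_ideal :: "nat \<Rightarrow> ((nat \<Rightarrow> 'k::field) \<Rightarrow> (nat \<Rightarrow> 'k) \<Rightarrow> (nat \<Rightarrow> 'k)) \<Rightarrow> (nat \<Rightarrow> 'k) \<Rightarrow> (nat \<Rightarrow> 'k) set" where
  "left_ideal n mul e = (\<lambda>a. mul a e) ` vecs n"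

text \<open>The \<open>(m+1)\<close>-th vertex is \<open>tgt (as ! m)\<close>.\<close>
definition nmult :: "nat set \<Rightarrow> nat set \<Rightarrow> (nat \<Rightarrow> nat) \<Rightarrow> (nat \<Rightarrow> nat) \<Rightarrow> (nat \<Rightarrow> nat) \<Rightarrow> nat \<Rightarrow> nat \<Rightarrow> nat \<Rightarrow> nat" where
  "nmult V E src tgt d dimI l i =
     (\<Sum>as\<in>{as. qpath V E src tgt l as \<and> as \<noteq> [] \<and> pend tgt l as = i}.
        (\<Prod>m<length as - 1. d (tgt (as ! m))) * dimI)"

end

theory Submission
  imports Defs
begin

lemma sc_vs: "vector_space (sc :: 'k::field \<Rightarrow> ('x \<Rightarrow> 'k) \<Rightarrow> ('x \<Rightarrow> 'k))"
  by unfold_locales (auto simp: sc_def fun_eq_iff algebra_simps)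

interpretation fv: vector_space "sc :: 'k::field \<Rightarrow> ('x \<Rightarrow> 'k) \<Rightarrow> ('x \<Rightarrow> 'k)"
  by (rule sc_vs)

lemma sum_fun_apply: "(sum f A) x = (\<Sum>a\<in>A. f a x)"
  by (induction A rule: infinite_finite_induct) auto

lemma sc_apply[simp]: "sc c f x = c * f x" by (simp add: sc_def)

lemma kspan_I: "x = (\<Sum>m<length vs. sc (c m) (vs ! m)) \<Longrightarrow> x \<in> kspan vs"
  unfolding kspan_def by blast

lemma kspan_eq: "kspan vs = fv.span (set vs)"
proof
  show "kspan vs \<subseteq> fv.span (set vs)"
  proof
    fix x assume "x \<in> kspan vs"
    then obtain c where "x = (\<Sum>m<length vs. sc (c m) (vs ! m))" unfolding kspan_def by auto
    also have "\<dots> \<in> fv.span (set vs)"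
      by (rule fv.span_sum, rule fv.span_scale, rule fv.span_base) simp
    finally show "x \<in> fv.span (set vs)" .
  qed
next
  have sub: "fv.subspace (kspan vs)"
  proof (rule fv.subspaceI)
    show "0 \<in> kspan vs"
      by (rule kspan_I[where c="\<lambda>_. 0"]) (auto simp: sc_def fun_eq_iff)
    fix x y assume "x \<in> kspan vs" "y \<in> kspan vs"
    then obtain c c' where "x = (\<Sum>m<length vs. sc (c m) (vs ! m))" "y = (\<Sum>m<length vs. sc (c' m) (vs ! m))"
      unfolding kspan_def by auto
    then have "x + y = (\<Sum>m<length vs. sc (c m + c' m) (vs ! m))"
      by (simp add: sum.distrib fv.scale_left_distrib)
    then show "x + y \<in> kspan vs" by (rule kspan_I)
  next
    fix a x assume "x \<in> kspan vs"
    then obtain c where "x = (\<Sum>m<length vs. sc (c m) (vs ! m))"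
      unfolding kspan_def by auto
    then have "sc a x = (\<Sum>m<length vs. sc (a * c m) (vs ! m))"
      by (simp add: fv.scale_sum_right)
    then show "sc a x \<in> kspan vs" by (rule kspan_I)
  qed
  have "set vs \<subseteq> kspan vs"
  proof
    fix v assume "v \<in> set vs"
    then obtain k where k: "k < length vs" "vs ! k = v" by (auto simp: in_set_conv_nth)
    have "(\<Sum>m<length vs. sc (if m = k then 1 else 0) (vs ! m)) = v"
      using k by (simp add: if_distrib[of "\<lambda>c. sc c _"] sum.delta cong: if_cong)
    then show "v \<in> kspan vs" by (rule kspan_I[OF sym])
  qed
  then show "fv.span (set vs) \<subseteq> kspan vs" using sub by (rule fv.span_minimal)
qed

lemma dimk_eq:
  fixes S :: "('x \<Rightarrow> 'k::field) set"
  assumes sub: "fv.subspace S" and fin: "finite B" and ind: "fv.independent B" and sp: "fv.span B = S"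
  shows "dimk S = card B"
  unfolding dimk_def
proof (rule Least_equality)
  obtain vs where vs: "set vs = B" "distinct vs" using finite_distinct_list[OF fin] by blast
  show "\<exists>vs. length vs = card B \<and> set vs \<subseteq> S \<and> kspan vs = S"
    using vs sp fv.span_superset[of B] by (auto simp: kspan_eq distinct_card intro!: exI[of _ vs])
next
  fix n assume "\<exists>vs. length vs = n \<and> set vs \<subseteq> S \<and> kspan vs = S"
  then obtain vs where vs: "length vs = n" "kspan vs = S" by auto
  have "B \<subseteq> fv.span (set vs)" using vs sp fv.span_superset[of B] by (auto simp: kspan_eq)
  then have "card B \<le> card (set vs)" using fv.independent_span_bound[OF _ ind] by auto
  also have "\<dots> \<le> n" using card_length vs by auto
  finally show "card B \<le> n" .
qed

lemma dual_subspace: "fv.subspace (dual S)"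
proof (rule fv.subspaceI)
  show "0 \<in> dual S" by (simp add: dual_def)
  fix x y assume "x \<in> dual S" "y \<in> dual S"
  then show "x + y \<in> dual S" by (simp add: dual_def algebra_simps)
next
  fix c x assume "x \<in> dual S"
  then show "sc c x \<in> dual S" by (simp add: dual_def distrib_left mult.left_commute)
qed

lemma dual_zero:
  assumes "fv.subspace S" "\<phi> \<in> dual S" shows "\<phi> 0 = 0"
proof -
  have "0 \<in> S" using assms(1) by (simp add: fv.subspace_def)
  then have "\<phi> (0 + 0) = \<phi> 0 + \<phi> 0" using assms(2) unfolding dual_def by blast
  then show ?thesis by (metis add.right_neutral add_left_cancel)
qed

lemma dual_sum:
  assumes "fv.subspace S" "\<phi> \<in> dual S" "\<And>a. a \<in> A \<Longrightarrow> g a \<in> S"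
  shows "\<phi> (sum g A) = (\<Sum>a\<in>A. \<phi> (g a))"
  using assms(3)
proof (induction A rule: infinite_finite_induct)
  case (infinite A) then show ?case using dual_zero[OF assms(1,2)] by (metis sum.infinite)
next
  case empty then show ?case using dual_zero[OF assms(1,2)] by (metis sum.empty)
next
  case (insert x F)
  have "sum g F \<in> S" using insert assms(1) by (auto intro!: fv.subspace_sum)
  have gx: "g x \<in> S" using insert by auto
  have ih: "\<phi> (sum g F) = (\<Sum>a\<in>F. \<phi> (g a))" using insert.IH insert.prems by blast
  have "\<phi> (sum g (insert x F)) = \<phi> (g x + sum g F)"
    by (simp only: sum.insert[OF insert(1,2)])
  also have "\<dots> = \<phi> (g x) + \<phi> (sum g F)"
    using assms(2) gx \<open>sum g F \<in> S\<close> unfolding dual_def by blast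
  also have "\<phi> (g x) + \<phi> (sum g F) = \<phi> (g x) + (\<Sum>a\<in>F. \<phi> (g a))" using ih by (simp only:)
  also have "\<dots> = (\<Sum>a\<in>insert x F. \<phi> (g a))" by (simp only: sum.insert[OF insert(1,2)])
  finally show ?case .
qed

definition dchi :: "('x \<Rightarrow> 'k::field) set \<Rightarrow> ('x \<Rightarrow> 'k) set \<Rightarrow> ('x \<Rightarrow> 'k) \<Rightarrow> (('x \<Rightarrow> 'k) \<Rightarrow> 'k)" where
  "dchi S B b = (\<lambda>x. if x \<in> S then fv.representation B x b else 0)"

lemma dual_basis:
  fixes S :: "('x \<Rightarrow> 'k::field) set"
  assumes sub: "fv.subspace S" and fin: "finite B" and ind: "fv.independent B" and sp: "fv.span B = S"
  shows "dchi S B ` B \<subseteq> dual S" "inj_on (dchi S B) B" "fv.independent (dchi S B ` B)"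
    "fv.span (dchi S B ` B) = dual S"
proof -
  have BS: "B \<subseteq> S" using sp fv.span_superset by blast
  have ev: "dchi S B b b' = (if b' = b then 1 else 0)" if "b \<in> B" "b' \<in> B" for b b'
  proof -
    have "b' \<in> S" using that BS by blast
    then have "dchi S B b b' = fv.representation B b' b" by (simp add: dchi_def)
    also have "\<dots> = (if b = b' then 1 else 0)" using fv.representation_basis[OF ind \<open>b' \<in> B\<close>] by simp
    finally show ?thesis by auto
  qed
  show D: "dchi S B ` B \<subseteq> dual S"
  proof safe
    fix b assume "b \<in> B"
    have sS: "x + y \<in> S" "sc c x \<in> S" if "x \<in> S" "y \<in> S" for x y c
      using sub that by (auto simp: fv.subspace_def)
    show "dchi S B b \<in> dual S" unfolding dual_def
    proof (intro CollectI conjI ballI allI impI)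
      fix x y assume xy: "x \<in> S" "y \<in> S"
      then have "fv.representation B (x + y) = (\<lambda>b. fv.representation B x b + fv.representation B y b)"
        using fv.representation_add[OF ind, of y x] sp by simp
      then show "dchi S B b (x + y) = dchi S B b x + dchi S B b y"
        using xy sS by (simp add: dchi_def)
    next
      fix c x assume xy: "x \<in> S"
      then have "fv.representation B (sc c x) = (\<lambda>b. c * fv.representation B x b)"
        using fv.representation_scale[OF ind, of x c] sp by simp
      then show "dchi S B b (sc c x) = c * dchi S B b x"
        using xy sS by (simp add: dchi_def)
    next
      fix x assume "x \<notin> S" then show "dchi S B b x = 0" by (simp add: dchi_def)
    qed
  qed
  show inj: "inj_on (dchi S B) B"
  proof (rule inj_onI)
    fix b b' assume "b \<in> B" "b' \<in> B" "dchi S B b = dchi S B b'"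
    then have "dchi S B b b = dchi S B b' b" by simp
    then show "b = b'" using ev \<open>b \<in> B\<close> \<open>b' \<in> B\<close> by (auto split: if_splits)
  qed
  show "fv.independent (dchi S B ` B)"
    apply (rule fv.independent_if_scalars_zero)
     apply (simp add: fin)
    subgoal premises prems for f \<psi>
    proof -
      from prems(2) obtain b0 where b0: "b0 \<in> B" "\<psi> = dchi S B b0" by blast
      have "0 = (\<Sum>x\<in>dchi S B ` B. sc (f x) x) b0" unfolding prems(1) by simp
      also have "\<dots> = (\<Sum>x\<in>dchi S B ` B. f x * x b0)"
        by (simp only: sum_fun_apply sc_apply)
      also have "\<dots> = (\<Sum>b\<in>B. f (dchi S B b) * dchi S B b b0)"
        by (simp only: sum.reindex[OF inj] o_def)
      also have "\<dots> = (\<Sum>b\<in>B. if b = b0 then f (dchi S B b) else 0)"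
        by (rule sum.cong) (simp_all add: ev b0)
      also have "\<dots> = f \<psi>" using b0 fin by (simp add: sum.delta)
      finally show "f \<psi> = 0" by simp
    qed
    done
  show "fv.span (dchi S B ` B) = dual S"
  proof
    show "fv.span (dchi S B ` B) \<subseteq> dual S"
      using D dual_subspace by (rule fv.span_minimal)
  next
    show "dual S \<subseteq> fv.span (dchi S B ` B)"
    proof
      fix \<phi> assume \<phi>: "\<phi> \<in> dual S"
      have "\<phi> = (\<Sum>b\<in>B. sc (\<phi> b) (dchi S B b))"
      proof
        fix x
        show "\<phi> x = (\<Sum>b\<in>B. sc (\<phi> b) (dchi S B b)) x"
        proof (cases "x \<in> S")
          case True
          have "\<phi> x = \<phi> (\<Sum>b\<in>B. sc (fv.representation B x b) b)"
            using fv.sum_representation_eq[OF ind, of x B] True sp fin by simp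
          also have "\<dots> = (\<Sum>b\<in>B. \<phi> (sc (fv.representation B x b) b))"
            by (rule dual_sum[OF sub \<phi>]) (use BS sub in \<open>auto simp: fv.subspace_def\<close>)
          also have "\<dots> = (\<Sum>b\<in>B. \<phi> b * fv.representation B x b)"
            using \<phi> BS by (intro sum.cong) (auto simp: dual_def mult.commute)
          finally show ?thesis using True by (simp add: sum_fun_apply dchi_def)
        next
          case False
          then show ?thesis using \<phi> by (simp add: sum_fun_apply dchi_def dual_def)
        qed
      qed
      also have "\<dots> \<in> fv.span (dchi S B ` B)"
        by (rule fv.span_sum, rule fv.span_scale, rule fv.span_base) simp
      finally show "\<phi> \<in> fv.span (dchi S B ` B)" .
    qed
  qed
qed

lemma dimk_dual:
  fixes S :: "('x \<Rightarrow> 'k::field) set"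
  assumes sub: "fv.subspace S" and fin: "finite B" and ind: "fv.independent B" and sp: "fv.span B = S"
  shows "dimk (dual S) = card B"
proof -
  note db = dual_basis[OF assms]
  have "dimk (dual S) = card (dchi S B ` B)"
    by (rule dimk_eq[OF dual_subspace]) (use db fin in simp_all)
  then show ?thesis using db(2) by (simp add: card_image)
qed

lemma vecs_subspace: "fv.subspace (vecs n)"
  by (rule fv.subspaceI) (auto simp: vecs_def)

lemma delta_vecs: "m < n \<Longrightarrow> delta m \<in> vecs n"
  by (auto simp: vecs_def delta_def)

lemma vecs_decomp: fixes x :: "nat \<Rightarrow> 'k::field" shows "x \<in> vecs n \<Longrightarrow> x = (\<Sum>m<n. sc (x m) (delta m))"
proof
  fix r assume x: "x \<in> vecs n"
  show "x r = (\<Sum>m<n. sc (x m) (delta m)) r"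
  proof (cases "r < n")
    case True
    have "(\<Sum>m<n. sc (x m) (delta m)) r = (\<Sum>m<n. if m = r then x m else 0)"
      unfolding sum_fun_apply by (rule sum.cong) (auto simp: delta_def)
    then show ?thesis using True by simp
  next
    case False
    have "(\<Sum>m<n. sc (x m) (delta m)) r = (\<Sum>m<n. 0)"
      unfolding sum_fun_apply by (rule sum.cong) (use False in \<open>auto simp: delta_def\<close>)
    then show ?thesis using False x by (simp add: vecs_def)
  qed
qed

lemma vecs_span: "(vecs n :: (nat \<Rightarrow> 'k::field) set) \<subseteq> fv.span (delta ` {..<n})"
proof
  fix x :: "nat \<Rightarrow> 'k" assume "x \<in> vecs n"
  then have "x = (\<Sum>m<n. sc (x m) (delta m))" by (rule vecs_decomp)
  also have "\<dots> \<in> fv.span (delta ` {..<n})"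
    by (rule fv.span_sum, rule fv.span_scale, rule fv.span_base) simp
  finally show "x \<in> fv.span (delta ` {..<n})" .
qed

lemma fin_basis:
  fixes S :: "(nat \<Rightarrow> 'k::field) set"
  assumes "fv.subspace S" "S \<subseteq> vecs n"
  obtains B where "finite B" "fv.independent B" "fv.span B = S"
proof -
  obtain B :: "(nat \<Rightarrow> 'k) set" where B: "B \<subseteq> S" "fv.independent B" "S \<subseteq> fv.span B" "card B = fv.dim S"
    by (rule fv.basis_exists)
  have "B \<subseteq> fv.span (delta ` {..<n})" using B(1) assms(2) vecs_span by blast
  then have "finite B" using fv.independent_span_bound[OF _ B(2)] by auto
  moreover have "fv.span B = S" using fv.span_subspace[OF B(1) B(3) assms(1)] .
  ultimately show ?thesis using that B(2) by blast
qed

lemma fd_closed: "fd_alg n mul one \<Longrightarrow> a \<in> vecs n \<Longrightarrow> b \<in> vecs n \<Longrightarrow> mul a b \<in> vecs n"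
  by (simp add: fd_alg_def)

lemma fd_zero_left: assumes "fd_alg n mul one" "b \<in> vecs n" shows "mul 0 b = 0"
proof -
  have z: "(0::nat\<Rightarrow>'a) \<in> vecs n" by (simp add: vecs_def)
  have "mul (0 + 0) b = mul 0 b + mul 0 b" using assms z unfolding fd_alg_def by blast
  then show ?thesis by (metis add.right_neutral add_left_cancel)
qed

lemma fd_zero_right: assumes "fd_alg n mul one" "a \<in> vecs n" shows "mul a 0 = 0"
proof -
  have z: "(0::nat\<Rightarrow>'a) \<in> vecs n" by (simp add: vecs_def)
  have "mul a (0 + 0) = mul a 0 + mul a 0" using assms z unfolding fd_alg_def by blast
  then show ?thesis by (metis add.right_neutral add_left_cancel)
qed

lemma vecs_sum:
  fixes f :: "'p \<Rightarrow> nat \<Rightarrow> 'k::field"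
  assumes "\<And>p. p \<in> P \<Longrightarrow> f p \<in> vecs n" shows "sum f P \<in> vecs n"
  using fv.subspace_sum[OF vecs_subspace, of P f] assms by blast

lemma vecs_sc: fixes x :: "nat \<Rightarrow> 'k::field" shows "x \<in> vecs n \<Longrightarrow> sc c x \<in> vecs n"
  by (simp add: vecs_def)

lemma fd_sum_left:
  assumes fd: "fd_alg n mul one" and f: "\<And>p. p \<in> P \<Longrightarrow> f p \<in> vecs n" and b: "b \<in> vecs n"
  shows "mul (sum f P) b = (\<Sum>p\<in>P. mul (f p) b)"
  using f
proof (induction P rule: infinite_finite_induct)
  case (infinite A) then show ?case using fd_zero_left[OF fd b] by (metis sum.infinite)
next
  case empty then show ?case using fd_zero_left[OF fd b] by (metis sum.empty)
next
  case (insert x F)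
  have s: "sum f F \<in> vecs n" using insert by (intro vecs_sum) auto
  have fx: "f x \<in> vecs n" using insert by auto
  have ih: "mul (sum f F) b = (\<Sum>p\<in>F. mul (f p) b)" using insert.IH insert.prems by blast
  have "mul (sum f (insert x F)) b = mul (f x + sum f F) b" by (simp only: sum.insert[OF insert(1,2)])
  also have "\<dots> = mul (f x) b + mul (sum f F) b" using fd s fx b unfolding fd_alg_def by blast
  also have "\<dots> = mul (f x) b + (\<Sum>p\<in>F. mul (f p) b)" by (simp only: ih)
  also have "\<dots> = (\<Sum>p\<in>insert x F. mul (f p) b)" by (simp only: sum.insert[OF insert(1,2)])
  finally show ?case .
qed

lemma fd_sum_right:
  assumes fd: "fd_alg n mul one" and f: "\<And>p. p \<in> P \<Longrightarrow> f p \<in> vecs n" and a: "a \<in> vecs n"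
  shows "mul a (sum f P) = (\<Sum>p\<in>P. mul a (f p))"
  using f
proof (induction P rule: infinite_finite_induct)
  case (infinite A) then show ?case using fd_zero_right[OF fd a] by (metis sum.infinite)
next
  case empty then show ?case using fd_zero_right[OF fd a] by (metis sum.empty)
next
  case (insert x F)
  have s: "sum f F \<in> vecs n" using insert by (intro vecs_sum) auto
  have fx: "f x \<in> vecs n" using insert by auto
  have ih: "mul a (sum f F) = (\<Sum>p\<in>F. mul a (f p))" using insert.IH insert.prems by blast
  have "mul a (sum f (insert x F)) = mul a (f x + sum f F)" by (simp only: sum.insert[OF insert(1,2)])
  also have "\<dots> = mul a (f x) + mul a (sum f F)" using fd s fx a unfolding fd_alg_def by blast
  also have "\<dots> = mul a (f x) + (\<Sum>p\<in>F. mul a (f p))" by (simp only: ih)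
  also have "\<dots> = (\<Sum>p\<in>insert x F. mul a (f p))" by (simp only: sum.insert[OF insert(1,2)])
  finally show ?case .
qed

lemma fd_sc_left: "fd_alg n mul one \<Longrightarrow> a \<in> vecs n \<Longrightarrow> b \<in> vecs n \<Longrightarrow> mul (sc c a) b = sc c (mul a b)"
  by (simp add: fd_alg_def)
lemma fd_sc_right: "fd_alg n mul one \<Longrightarrow> a \<in> vecs n \<Longrightarrow> b \<in> vecs n \<Longrightarrow> mul a (sc c b) = sc c (mul a b)"
  by (simp add: fd_alg_def)

lemma fd_bilin:
  assumes fd: "fd_alg n mul one" and a: "a \<in> vecs n" and b: "b \<in> vecs n"
  shows "mul a b r = (\<Sum>p<n. \<Sum>q<n. a p * b q * mul (delta p) (delta q) r)"
proof -
  have "mul a b = mul (\<Sum>p<n. sc (a p) (delta p)) (\<Sum>q<n. sc (b q) (delta q))"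
    using vecs_decomp[OF a] vecs_decomp[OF b] by simp
  also have "\<dots> = (\<Sum>p<n. mul (sc (a p) (delta p)) (\<Sum>q<n. sc (b q) (delta q)))"
    by (rule fd_sum_left[OF fd]) (auto intro!: vecs_sc delta_vecs vecs_sum)
  also have "\<dots> = (\<Sum>p<n. \<Sum>q<n. mul (sc (a p) (delta p)) (sc (b q) (delta q)))"
    by (rule sum.cong[OF refl], rule fd_sum_right[OF fd]) (auto intro!: vecs_sc delta_vecs)
  also have "\<dots> = (\<Sum>p<n. \<Sum>q<n. sc (a p * b q) (mul (delta p) (delta q)))"
    by (intro sum.cong refl)
       (simp add: fd_sc_left[OF fd] fd_sc_right[OF fd] vecs_sc delta_vecs mult.commute)
  finally show ?thesis by (simp add: sum_fun_apply)
qed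

locale gctx =
  fixes V E :: "nat set" and src tgt :: "nat \<Rightarrow> nat" and d :: "nat \<Rightarrow> nat"
    and mul :: "nat \<Rightarrow> (nat \<Rightarrow> 'k::field) \<Rightarrow> (nat \<Rightarrow> 'k) \<Rightarrow> (nat \<Rightarrow> 'k)"
    and one :: "nat \<Rightarrow> (nat \<Rightarrow> 'k)"
  assumes quiv: "quiver V E src tgt" and acyc: "acyclic_quiver V E src tgt"
    and fd: "\<And>v. v \<in> V \<Longrightarrow> fd_alg (d v) (mul v) (one v)"
begin

abbreviation "G \<equiv> gwords V E src tgt d"
abbreviation "gmul \<equiv> gpa_mult V E src tgt d mul"
abbreviation "Lam \<equiv> (gpa V E src tgt d :: ((nat \<times> nat list \<times> nat list) \<Rightarrow> 'k) set)"
abbreviation "qp \<equiv> qpath V E src tgt"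

lemma finV: "finite V" and finE: "finite E" and tgtV: "\<alpha> \<in> E \<Longrightarrow> tgt \<alpha> \<in> V"
  and srcV: "\<alpha> \<in> E \<Longrightarrow> src \<alpha> \<in> V"
  using quiv by (auto simp: quiver_def)

lemma pvert_V: "qp v as \<Longrightarrow> m \<le> length as \<Longrightarrow> pvert tgt v as m \<in> V"
  by (cases m) (auto simp: pvert_def qpath_def intro!: tgtV)

lemma src_pvert: "qp v as \<Longrightarrow> m < length as \<Longrightarrow> src (as ! m) = pvert tgt v as m"
  by (cases m) (auto simp: pvert_def qpath_def hd_conv_nth)

lemma pvert_sub:
  assumes "qp v as" "m + k \<le> length as" "k \<le> n"
  shows "pvert tgt (pvert tgt v as m) (take n (drop m as)) k = pvert tgt v as (m + k)"
  using assms by (cases k) (auto simp: pvert_def)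

lemma qpath_sub:
  assumes p: "qp v as" and mm: "m \<le> m'" "m' \<le> length as"
  shows "qp (pvert tgt v as m) (take (m' - m) (drop m as))"
    "pend tgt (pvert tgt v as m) (take (m' - m) (drop m as)) = pvert tgt v as m'"
proof -
  show "qp (pvert tgt v as m) (take (m' - m) (drop m as))"
    unfolding qpath_def
  proof (intro conjI allI impI)
    show "pvert tgt v as m \<in> V" using pvert_V[OF p] mm by simp
    show "set (take (m' - m) (drop m as)) \<subseteq> E" using p
      by (auto simp: qpath_def dest: in_set_takeD in_set_dropD)
    assume ne: "take (m' - m) (drop m as) \<noteq> []"
    then have "m < length as" by auto
    then show "src (hd (take (m' - m) (drop m as))) = pvert tgt v as m"
      using ne src_pvert[OF p] by (simp add: hd_conv_nth)
  next
    fix k assume "Suc k < length (take (m' - m) (drop m as))"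
    then show "tgt (take (m' - m) (drop m as) ! k) = src (take (m' - m) (drop m as) ! Suc k)"
      using p by (auto simp: qpath_def)
  qed
  show "pend tgt (pvert tgt v as m) (take (m' - m) (drop m as)) = pvert tgt v as m'"
    unfolding pend_def using pvert_sub[OF p, of m "m' - m" "m' - m"] mm by simp
qed

lemma path_len: assumes p: "qp v as" shows "length as < card V"
proof -
  have inj: "inj_on (pvert tgt v as) {0..length as}"
  proof (rule inj_onI, rule ccontr)
    fix m m' assume mm: "m \<in> {0..length as}" "m' \<in> {0..length as}" "pvert tgt v as m = pvert tgt v as m'" "m \<noteq> m'"
    have *: False if "m < m'" "m' \<le> length as" "pvert tgt v as m = pvert tgt v as m'" for m m'
    proof -
      let ?s = "take (m' - m) (drop m as)"
      have "qp (pvert tgt v as m) ?s" "pend tgt (pvert tgt v as m) ?s = pvert tgt v as m'"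
        using qpath_sub[OF p, of m m'] that by auto
      moreover have "?s \<noteq> []" using that by auto
      ultimately show False using acyc that(3) unfolding acyclic_quiver_def by metis
    qed
    show False
    proof (cases "m < m'")
      case True then show ?thesis using * mm by auto
    next
      case False then show ?thesis using *[of m' m] mm by auto
    qed
  qed
  have "pvert tgt v as ` {0..length as} \<subseteq> V" using pvert_V[OF p] by auto
  then have "card {0..length as} \<le> card V" using card_inj_on_le[OF inj _ finV] by blast
  then show ?thesis by simp
qed

lemma finG: "finite G"
proof -
  let ?A = "{as. set as \<subseteq> E \<and> length as \<le> card V}"
  let ?I = "{is. set is \<subseteq> {..<sum d V} \<and> length is \<le> Suc (card V)}"
  have "G \<subseteq> V \<times> ?A \<times> ?I"
  proof
    fix w assume w: "w \<in> G"
    obtain v as "is" where wd: "w = (v, as, is)" by (cases w) auto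
    have p: "qp v as" and l: "length is = Suc (length as)"
      and b: "\<forall>m<length is. is ! m < d (pvert tgt v as m)" using w wd by (auto simp: gwords_def)
    have "set is \<subseteq> {..<sum d V}"
    proof
      fix x assume "x \<in> set is"
      then obtain m where m: "m < length is" "is ! m = x" by (auto simp: in_set_conv_nth)
      have "pvert tgt v as m \<in> V" using pvert_V[OF p] m l by simp
      then have "d (pvert tgt v as m) \<le> sum d V" using finV by (intro member_le_sum) auto
      then show "x \<in> {..<sum d V}" using b m by fastforce
    qed
    then show "w \<in> V \<times> ?A \<times> ?I" using wd p path_len[OF p] l by (auto simp: qpath_def)
  qed
  moreover have "finite (V \<times> ?A \<times> ?I)"
    using finV finE by (auto intro!: finite_lists_length_le)
  ultimately show ?thesis by (rule finite_subset)
qed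


lemma sum_reduce:
  assumes "finite A" "inj_on h K" "h ` K \<subseteq> A" "\<And>u. u \<in> A \<Longrightarrow> u \<notin> h ` K \<Longrightarrow> F u = 0"
  shows "sum F A = (\<Sum>k\<in>K. F (h k))"
proof -
  have "sum F A = sum F (h ` K)"
    by (rule sum.mono_neutral_right) (use assms in auto)
  also have "\<dots> = (\<Sum>k\<in>K. F (h k))" using sum.reindex[OF assms(2)] by simp
  finally show ?thesis .
qed

lemma lam_zero: "x \<in> Lam \<Longrightarrow> w \<notin> G \<Longrightarrow> x w = 0"
  unfolding gpa_def by blast

lemma triv_G: "v \<in> V \<Longrightarrow> p < d v \<Longrightarrow> (v, [], [p]) \<in> G"
  by (auto simp: gwords_def qpath_def pvert_def)

lemma G_D: assumes "(v, bs, js) \<in> G"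
  shows "qp v bs" "length js = Suc (length bs)" "\<And>m. m < length js \<Longrightarrow> js ! m < d (pvert tgt v bs m)"
  using assms by (auto simp: gwords_def)

lemma G_first: assumes "(v, bs, js) \<in> G" "q < d v" shows "(v, bs, q # tl js) \<in> G"
proof -
  note g = G_D[OF assms(1)]
  have js: "js = hd js # tl js" using g(2) by (cases js) auto
  have l: "length (q # tl js) = Suc (length bs)" using g(2) by (cases js) auto
  have b: "\<forall>m < length (q # tl js). (q # tl js) ! m < d (pvert tgt v bs m)"
  proof (intro allI impI)
    fix m assume m: "m < length (q # tl js)"
    show "(q # tl js) ! m < d (pvert tgt v bs m)"
    proof (cases m)
      case 0 then show ?thesis using assms(2) by (simp add: pvert_def)
    next
      case (Suc m')
      have "js ! m < d (pvert tgt v bs m)" using g(3) m l g(2) by simp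
      then show ?thesis using Suc js by (metis nth_Cons_Suc)
    qed
  qed
  show ?thesis unfolding gwords_def using g(1) l b by blast
qed

lemma mult_incl_left:
  assumes v: "v \<in> V" and a: "a \<in> vecs (d v)" and x: "x \<in> Lam"
  shows "gmul (gincl d v a) x (v', bs, js) =
    (if (v', bs, js) \<in> G \<and> v' = v then mul v a (\<lambda>q. x (v, bs, q # tl js)) (hd js) else 0)"
proof (cases "(v', bs, js) \<in> G")
  case False then show ?thesis by (simp add: gpa_mult_def)
next
  case w: True
  let ?w = "(v', bs, js)"
  have "gmul (gincl d v a) x ?w = (\<Sum>u\<in>G. \<Sum>u'\<in>G. gincl d v a u * x u' * bcoef tgt mul u u' ?w)"
    using w by (simp add: gpa_mult_def)
  also have "\<dots> = (\<Sum>p<d v. \<Sum>u'\<in>G. gincl d v a (v, [], [p]) * x u' * bcoef tgt mul (v, [], [p]) u' ?w)"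
  proof (rule sum_reduce[OF finG])
    show "inj_on (\<lambda>p. (v, [], [p])) {..<d v}" by (auto simp: inj_on_def)
    show "(\<lambda>p. (v, [], [p])) ` {..<d v} \<subseteq> G" using triv_G[OF v] by auto
    fix u assume u: "u \<in> G" "u \<notin> (\<lambda>p. (v, [], [p])) ` {..<d v}"
    have "gincl d v a u = 0"
    proof (cases u)
      case (fields v1 as1 is1)
      show ?thesis
      proof (cases "v1 = v \<and> as1 = [] \<and> length is1 = 1 \<and> hd is1 < d v")
        case True
        then have "is1 = [hd is1]" by (cases is1) auto
        then have "u \<in> (\<lambda>p. (v, [], [p])) ` {..<d v}" using True fields by (metis image_eqI lessThan_iff)
        then show ?thesis using u by simp
      qed (auto simp: gincl_def fields)
    qed
    then show "(\<Sum>u'\<in>G. gincl d v a u * x u' * bcoef tgt mul u u' ?w) = 0" by simp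
  qed
  also have "\<dots> = (\<Sum>p<d v. if v' = v then (\<Sum>q<d v. a p * x (v, bs, q # tl js) * mul v (delta p) (delta q) (hd js)) else 0)"
  proof (rule sum.cong[OF refl])
    fix p assume p: "p \<in> {..<d v}"
    have gi: "gincl d v a (v, [], [p]) = a p" using p by (simp add: gincl_def)
    show "(\<Sum>u'\<in>G. gincl d v a (v, [], [p]) * x u' * bcoef tgt mul (v, [], [p]) u' ?w) =
      (if v' = v then (\<Sum>q<d v. a p * x (v, bs, q # tl js) * mul v (delta p) (delta q) (hd js)) else 0)"
    proof (cases "v' = v")
      case False
      have "bcoef tgt mul (v, [], [p]) u' ?w = 0" for u'
        using False by (cases u') (simp add: bcoef_def)
      then show ?thesis using False by simp
    next
      case True
      have js: "js \<noteq> []" using G_D(2)[OF w] by auto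
      have "(\<Sum>u'\<in>G. gincl d v a (v, [], [p]) * x u' * bcoef tgt mul (v, [], [p]) u' ?w) =
        (\<Sum>q<d v. gincl d v a (v, [], [p]) * x (v, bs, q # tl js) * bcoef tgt mul (v, [], [p]) (v, bs, q # tl js) ?w)"
      proof (rule sum_reduce[OF finG])
        show "inj_on (\<lambda>q. (v, bs, q # tl js)) {..<d v}" by (auto simp: inj_on_def)
        show "(\<lambda>q. (v, bs, q # tl js)) ` {..<d v} \<subseteq> G" using G_first w True by auto
        fix u' assume u': "u' \<in> G" "u' \<notin> (\<lambda>q. (v, bs, q # tl js)) ` {..<d v}"
        obtain v1 as1 is1 where ud: "u' = (v1, as1, is1)" by (cases u') auto
        have "bcoef tgt mul (v, [], [p]) u' ?w = 0"
        proof (rule ccontr)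
          assume "bcoef tgt mul (v, [], [p]) u' ?w \<noteq> 0"
          then have c: "v1 = v" "as1 = bs" "length js = length is1" "tl js = tl is1"
            using True by (auto simp: bcoef_def ud pend_def pvert_def drop_Suc split: if_splits)
          have "is1 \<noteq> []" using G_D(2)[of v1 as1 is1] u'(1) ud by auto
          then have "is1 = hd is1 # tl js" using c by (cases is1) auto
          moreover have "hd is1 < d v" using G_D(3)[of v1 as1 is1 0] u'(1) ud c \<open>is1 \<noteq> []\<close>
            by (simp add: pvert_def hd_conv_nth)
          ultimately show False using u'(2) ud c by (metis image_eqI lessThan_iff)
        qed
        then show "gincl d v a (v, [], [p]) * x u' * bcoef tgt mul (v, [], [p]) u' ?w = 0" by simp
      qed
      also have "\<dots> = (\<Sum>q<d v. a p * x (v, bs, q # tl js) * mul v (delta p) (delta q) (hd js))"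
        using js True gi by (intro sum.cong refl) (simp add: bcoef_def pend_def pvert_def hd_conv_nth drop_Suc)
      finally show ?thesis using True by simp
    qed
  qed
  also have "\<dots> = (if v' = v then mul v a (\<lambda>q. x (v, bs, q # tl js)) (hd js) else 0)"
  proof (cases "v' = v")
    case True
    have X: "(\<lambda>q. x (v, bs, q # tl js)) \<in> vecs (d v)"
    proof -
      have "x (v, bs, q # tl js) = 0" if "q \<ge> d v" for q
      proof (rule lam_zero[OF x])
        show "(v, bs, q # tl js) \<notin> G" using G_D(3)[of v bs "q # tl js" 0] that by (auto simp: pvert_def)
      qed
      then show ?thesis by (simp add: vecs_def)
    qed
    show ?thesis using True fd_bilin[OF fd[OF v] a X, of "hd js"] by simp
  qed simp
  finally show ?thesis using w by simp
qed


lemma G_last: assumes "(v, bs, js) \<in> G" "pend tgt v bs = i" "p < d i"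
  shows "(v, bs, butlast js @ [p]) \<in> G"
proof -
  note g = G_D[OF assms(1)]
  have l: "length (butlast js @ [p]) = Suc (length bs)" using g(2) by simp
  have b: "\<forall>m < length (butlast js @ [p]). (butlast js @ [p]) ! m < d (pvert tgt v bs m)"
  proof (intro allI impI)
    fix m assume m: "m < length (butlast js @ [p])"
    show "(butlast js @ [p]) ! m < d (pvert tgt v bs m)"
    proof (cases "m < length bs")
      case True
      then have "(butlast js @ [p]) ! m = js ! m" using g(2) by (simp add: nth_append nth_butlast)
      then show ?thesis using g(3)[of m] True g(2) by simp
    next
      case False
      then have "m = length bs" using m l by simp
      then show ?thesis using assms(2,3) g(2) by (simp add: nth_append pend_def)
    qed
  qed
  show ?thesis unfolding gwords_def using g(1) l b by blast
qed

lemma mult_incl_right: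
  assumes i: "i \<in> V" and e: "e \<in> vecs (d i)" and x: "x \<in> Lam"
  shows "gmul x (gincl d i e) (v, bs, js) =
    (if (v, bs, js) \<in> G \<and> pend tgt v bs = i then mul i (\<lambda>p. x (v, bs, butlast js @ [p])) e (last js) else 0)"
proof (cases "(v, bs, js) \<in> G")
  case False then show ?thesis by (simp add: gpa_mult_def)
next
  case w: True
  let ?w = "(v, bs, js)"
  note g = G_D[OF w]
  have "gmul x (gincl d i e) ?w = (\<Sum>u\<in>G. \<Sum>u'\<in>G. x u * gincl d i e u' * bcoef tgt mul u u' ?w)"
    using w by (simp add: gpa_mult_def)
  also have "\<dots> = (\<Sum>u\<in>G. \<Sum>q<d i. x u * gincl d i e (i, [], [q]) * bcoef tgt mul u (i, [], [q]) ?w)"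
  proof (rule sum.cong[OF refl], rule sum_reduce[OF finG])
    show "inj_on (\<lambda>p. (i, [], [p])) {..<d i}" by (auto simp: inj_on_def)
    show "(\<lambda>p. (i, [], [p])) ` {..<d i} \<subseteq> G" using triv_G[OF i] by auto
    fix u u' assume u: "u' \<in> G" "u' \<notin> (\<lambda>p. (i, [], [p])) ` {..<d i}"
    have "gincl d i e u' = 0"
    proof (cases u')
      case (fields v1 as1 is1)
      show ?thesis
      proof (cases "v1 = i \<and> as1 = [] \<and> length is1 = 1 \<and> hd is1 < d i")
        case True
        then have "is1 = [hd is1]" by (cases is1) auto
        then have "u' = (\<lambda>p. (i, [], [p])) (hd is1)" "hd is1 \<in> {..<d i}" using True fields by auto
        then have "u' \<in> (\<lambda>p. (i, [], [p])) ` {..<d i}" by blast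
        then show ?thesis using u by simp
      qed (auto simp: gincl_def fields)
    qed
    then show "x u * gincl d i e u' * bcoef tgt mul u u' ?w = 0" by simp
  qed
  also have "\<dots> = (if pend tgt v bs = i then (\<Sum>p<d i. \<Sum>q<d i. x (v, bs, butlast js @ [p]) * e q * mul i (delta p) (delta q) (last js)) else 0)"
  proof (cases "pend tgt v bs = i")
    case False
    have "bcoef tgt mul u (i, [], [q]) ?w = 0" for u q
      using False by (cases u) (auto simp: bcoef_def)
    then show ?thesis using False by simp
  next
    case True
    have "(\<Sum>u\<in>G. \<Sum>q<d i. x u * gincl d i e (i, [], [q]) * bcoef tgt mul u (i, [], [q]) ?w) =
      (\<Sum>p<d i. \<Sum>q<d i. x (v, bs, butlast js @ [p]) * gincl d i e (i, [], [q]) * bcoef tgt mul (v, bs, butlast js @ [p]) (i, [], [q]) ?w)"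
    proof (rule sum_reduce[OF finG])
      show "inj_on (\<lambda>p. (v, bs, butlast js @ [p])) {..<d i}" by (auto simp: inj_on_def)
      show "(\<lambda>p. (v, bs, butlast js @ [p])) ` {..<d i} \<subseteq> G" using G_last[OF w True] by auto
      fix u assume u: "u \<in> G" "u \<notin> (\<lambda>p. (v, bs, butlast js @ [p])) ` {..<d i}"
      obtain v1 as1 is1 where ud: "u = (v1, as1, is1)" by (cases u) auto
      have "bcoef tgt mul u (i, [], [q]) ?w = 0" for q
      proof (rule ccontr)
        assume "bcoef tgt mul u (i, [], [q]) ?w \<noteq> 0"
        then have c: "v1 = v" "as1 = bs" "length js = length is1" "take (length bs) js = take (length bs) is1"
          by (auto simp: bcoef_def ud split: if_splits)
        have l1: "length is1 = Suc (length bs)" using G_D(2)[of v1 as1 is1] u(1) ud c by simp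
        have "is1 = take (length bs) is1 @ [is1 ! length bs]"
          using l1 by (metis append_take_drop_id Cons_nth_drop_Suc drop_all lessI le_refl)
        moreover have "take (length bs) js = butlast js" using g(2) by (simp add: butlast_conv_take)
        moreover have "is1 ! length bs < d i"
          using G_D(3)[of v1 as1 is1 "length bs"] u(1) ud c l1 True by (simp add: pend_def)
        ultimately have "u = (\<lambda>p. (v, bs, butlast js @ [p])) (is1 ! length bs)" "is1 ! length bs \<in> {..<d i}"
          using ud c by auto
        then show False using u(2) by blast
      qed
      then show "(\<Sum>q<d i. x u * gincl d i e (i, [], [q]) * bcoef tgt mul u (i, [], [q]) ?w) = 0" by simp
    qed
    also have "\<dots> = (\<Sum>p<d i. \<Sum>q<d i. x (v, bs, butlast js @ [p]) * e q * mul i (delta p) (delta q) (last js))"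
    proof (intro sum.cong refl)
      fix p q assume pq: "p \<in> {..<d i}" "q \<in> {..<d i}"
      have ln: "js ! length bs = last js" using g(2) by (metis diff_Suc_1 last_conv_nth length_0_conv nat.simps(3))
      have tk: "take (length bs) js = take (length bs) (butlast js @ [p])" using g(2) by (simp add: butlast_conv_take)
      have "bcoef tgt mul (v, bs, butlast js @ [p]) (i, [], [q]) ?w = mul i (delta p) (delta q) (last js)"
        using True g(2) tk ln by (simp add: bcoef_def)
      then show "x (v, bs, butlast js @ [p]) * gincl d i e (i, [], [q]) * bcoef tgt mul (v, bs, butlast js @ [p]) (i, [], [q]) ?w
        = x (v, bs, butlast js @ [p]) * e q * mul i (delta p) (delta q) (last js)"
        using pq by (simp add: gincl_def)
    qed
    finally show ?thesis using True by simp
  qed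
  also have "\<dots> = (if pend tgt v bs = i then mul i (\<lambda>p. x (v, bs, butlast js @ [p])) e (last js) else 0)"
  proof (cases "pend tgt v bs = i")
    case True
    have X: "(\<lambda>p. x (v, bs, butlast js @ [p])) \<in> vecs (d i)"
    proof -
      have "x (v, bs, butlast js @ [p]) = 0" if "p \<ge> d i" for p
      proof (rule lam_zero[OF x])
        show "(v, bs, butlast js @ [p]) \<notin> G"
          using G_D(3)[of v bs "butlast js @ [p]" "length bs"] that True g(2)
          by (auto simp: nth_append pend_def)
      qed
      then show ?thesis by (simp add: vecs_def)
    qed
    show ?thesis using True fd_bilin[OF fd[OF i] X e, of "last js"] by simp
  qed simp
  finally show ?thesis using w by simp
qed

end

context gctx begin

lemma gmul_Lam: "gmul f g \<in> Lam"
  by (simp add: gpa_def gpa_mult_def)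

lemma Lam_add: "x \<in> Lam \<Longrightarrow> y \<in> Lam \<Longrightarrow> x + y \<in> Lam"
  by (simp add: gpa_def)

lemma Lam_sc: "x \<in> Lam \<Longrightarrow> sc c x \<in> Lam"
  by (simp add: gpa_def)

lemma gmul_add_left: "gmul (f + f') g = gmul f g + gmul f' g"
proof
  fix w
  show "gmul (f + f') g w = (gmul f g + gmul f' g) w"
    by (simp add: gpa_mult_def distrib_right sum.distrib)
qed

lemma gmul_sc_left: "gmul (sc c f) g = sc c (gmul f g)"
proof
  fix w
  show "gmul (sc c f) g w = sc c (gmul f g) w"
    by (simp add: gpa_mult_def sum_distrib_left mult.assoc)
qed

lemma word_nonempty: "(v, bs, js) \<in> G \<Longrightarrow> js \<noteq> []"
  using G_D(2) by fastforce

lemma Pl: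
  assumes l: "l \<in> V" and x: "x \<in> Lam"
  shows "gmul (gincl d l (one l)) x (v, bs, js) = (if v = l then x (v, bs, js) else 0)"
proof -
  have one: "one l \<in> vecs (d l)" using fd[OF l] by (simp add: fd_alg_def)
  show ?thesis
  proof (cases "(v, bs, js) \<in> G \<and> v = l")
    case True
    from True have w: "(l, bs, js) \<in> G" by (metis)
    have X: "(\<lambda>q. x (l, bs, q # tl js)) \<in> vecs (d l)"
    proof -
      have "x (l, bs, q # tl js) = 0" if "q \<ge> d l" for q
      proof (rule lam_zero[OF x])
        show "(l, bs, q # tl js) \<notin> G" using G_D(3)[of l bs "q # tl js" 0] that by (auto simp: pvert_def)
      qed
      then show ?thesis by (simp add: vecs_def)
    qed
    have "mul l (one l) (\<lambda>q. x (l, bs, q # tl js)) = (\<lambda>q. x (l, bs, q # tl js))"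
      using fd[OF l] X by (simp add: fd_alg_def)
    moreover have "hd js # tl js = js" using word_nonempty[OF w] by simp
    moreover have vl: "v = l" using True by simp
    ultimately show ?thesis using mult_incl_left[OF l one x, of l bs js] w by simp
  next
    case False
    then show ?thesis using mult_incl_left[OF l one x, of v bs js] lam_zero[OF x] by auto
  qed
qed

end

locale ictx = gctx V E src tgt d mul one
  for V E src tgt d and mul :: "nat \<Rightarrow> (nat \<Rightarrow> 'k::field) \<Rightarrow> (nat \<Rightarrow> 'k) \<Rightarrow> (nat \<Rightarrow> 'k)" and one +
  fixes i :: nat and e :: "nat \<Rightarrow> 'k"
  assumes iV: "i \<in> V" and eV: "e \<in> vecs (d i)"
begin

abbreviation "LamE \<equiv> gpa_proj V E src tgt d mul i e"
abbreviation "S \<equiv> left_ideal (d i) (mul i) e"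

lemma LamE_Lam: "x \<in> LamE \<Longrightarrow> x \<in> Lam"
  by (auto simp: gpa_proj_def gmul_Lam)

lemma LamE_subspace: "fv.subspace LamE"
proof (rule fv.subspaceI)
  have "gmul 0 (gincl d i e) = 0"
    by (rule ext) (simp add: gpa_mult_def)
  moreover have "(0 :: (nat \<times> nat list \<times> nat list) \<Rightarrow> 'k) \<in> Lam" by (simp add: gpa_def)
  ultimately show "0 \<in> LamE" unfolding gpa_proj_def by (metis image_eqI)
next
  fix x y assume "x \<in> LamE" "y \<in> LamE"
  then obtain f g where "f \<in> Lam" "g \<in> Lam" "x = gmul f (gincl d i e)" "y = gmul g (gincl d i e)"
    unfolding gpa_proj_def by blast
  then have "x + y = gmul (f + g) (gincl d i e)" "f + g \<in> Lam"
    by (simp_all add: gmul_add_left Lam_add)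
  then show "x + y \<in> LamE" unfolding gpa_proj_def by blast
next
  fix c x assume "x \<in> LamE"
  then obtain f where "f \<in> Lam" "x = gmul f (gincl d i e)"
    unfolding gpa_proj_def by blast
  then have "sc c x = gmul (sc c f) (gincl d i e)" "sc c f \<in> Lam"
    by (simp_all add: gmul_sc_left Lam_sc)
  then show "sc c x \<in> LamE" unfolding gpa_proj_def by blast
qed

lemma slice_vecs:
  assumes f: "f \<in> Lam" and w: "(v, bs, js) \<in> G" and p: "pend tgt v bs = i"
  shows "(\<lambda>q. f (v, bs, butlast js @ [q])) \<in> vecs (d i)"
proof -
  have l: "length js = Suc (length bs)" using G_D(2)[OF w] .
  have "f (v, bs, butlast js @ [q]) = 0" if "q \<ge> d i" for q
  proof (rule lam_zero[OF f])
    show "(v, bs, butlast js @ [q]) \<notin> G"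
      using G_D(3)[of v bs "butlast js @ [q]" "length bs"] that p l
      by (auto simp: nth_append pend_def)
  qed
  then show ?thesis by (simp add: vecs_def)
qed

lemma LamE_form:
  assumes x: "x \<in> LamE"
  obtains f where "f \<in> Lam" "\<And>v bs js. x (v, bs, js) =
    (if (v, bs, js) \<in> G \<and> pend tgt v bs = i then mul i (\<lambda>p. f (v, bs, butlast js @ [p])) e (last js) else 0)"
proof -
  obtain f where f: "f \<in> Lam" "x = gmul f (gincl d i e)" using x unfolding gpa_proj_def by blast
  show ?thesis using that[OF f(1)] mult_incl_right[OF iV eV f(1)] f(2) by simp
qed

lemma LamE_nz: "x \<in> LamE \<Longrightarrow> x (v, bs, js) \<noteq> 0 \<Longrightarrow> (v, bs, js) \<in> G \<and> pend tgt v bs = i"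
  by (erule LamE_form) (auto split: if_splits)

lemma S_subspace: "fv.subspace S"
proof -
  note F = fd[OF iV]
  show ?thesis
  proof (rule fv.subspaceI)
    have "mul i 0 e = 0" using fd_zero_left[OF F eV] .
    moreover have "(0::nat \<Rightarrow> 'k) \<in> vecs (d i)" by (simp add: vecs_def)
    ultimately show "0 \<in> S" unfolding left_ideal_def by (metis image_eqI)
  next
    fix x y assume "x \<in> S" "y \<in> S"
    then obtain a b where ab: "a \<in> vecs (d i)" "b \<in> vecs (d i)" "x = mul i a e" "y = mul i b e"
      unfolding left_ideal_def by blast
    have "x + y = mul i (a + b) e" using F ab eV unfolding fd_alg_def by simp
    moreover have "a + b \<in> vecs (d i)" using ab by (simp add: vecs_def)
    ultimately show "x + y \<in> S" unfolding left_ideal_def by blast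
  next
    fix c x assume "x \<in> S"
    then obtain a where a: "a \<in> vecs (d i)" "x = mul i a e"
      unfolding left_ideal_def by blast
    have "sc c x = mul i (sc c a) e" using F a eV unfolding fd_alg_def by simp
    moreover have "sc c a \<in> vecs (d i)" using a(1) by (rule vecs_sc)
    ultimately show "sc c x \<in> S" unfolding left_ideal_def by blast
  qed
qed

lemma S_vecs: "S \<subseteq> vecs (d i)"
  using fd_closed[OF fd[OF iV] _ eV] unfolding left_ideal_def by blast

lemma LamE_slice_S:
  assumes x: "x \<in> LamE" and w: "(v, bs, t @ [r0]) \<in> G" and p: "pend tgt v bs = i"
  shows "(\<lambda>r. x (v, bs, t @ [r])) \<in> S"
proof -
  obtain f where f: "f \<in> Lam" and xf: "\<And>v bs js. x (v, bs, js) =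
    (if (v, bs, js) \<in> G \<and> pend tgt v bs = i then mul i (\<lambda>p. f (v, bs, butlast js @ [p])) e (last js) else 0)"
    using LamE_form[OF x] by blast
  let ?X = "\<lambda>q. f (v, bs, t @ [q])"
  have X: "?X \<in> vecs (d i)" using slice_vecs[OF f w p] by simp
  have M: "mul i ?X e \<in> vecs (d i)" using fd_closed[OF fd[OF iV] X eV] .
  have "(\<lambda>r. x (v, bs, t @ [r])) = mul i ?X e"
  proof
    fix r
    show "x (v, bs, t @ [r]) = mul i ?X e r"
    proof (cases "r < d i")
      case True
      have "(v, bs, butlast (t @ [r0]) @ [r]) \<in> G" using G_last[OF w p True] .
      then show ?thesis using xf p by simp
    next
      case False
      have "(v, bs, t @ [r]) \<notin> G"
        using G_D(3)[of v bs "t @ [r]" "length bs"] G_D(2)[OF w] False p by (auto simp: pend_def nth_append)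
      then show ?thesis using xf M False by (simp add: vecs_def)
    qed
  qed
  then show ?thesis using X unfolding left_ideal_def by blast
qed

end

context ictx begin

abbreviation "P l x \<equiv> gmul (gincl d l (one l)) x"
abbreviation "psi l \<phi> \<equiv> dact LamE gmul \<phi> (gincl d l (one l))"

lemma gincl_Lam: assumes "v \<in> V" shows "gincl d v c \<in> Lam"
  unfolding gpa_def
proof (intro CollectI allI impI)
  fix w assume w: "w \<notin> G"
  obtain v' as "is" where wd: "w = (v', as, is)" by (cases w) auto
  show "gincl d v c w = 0"
  proof (cases "v' = v \<and> as = [] \<and> length is = 1 \<and> hd is < d v")
    case True
    then have "is = [hd is]" by (cases "is") auto
    then have "w \<in> G" using triv_G[OF assms] True wd by metis
    then show ?thesis using w by simp
  qed (auto simp: gincl_def wd)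
qed

lemma mul_zero_fun: "v \<in> V \<Longrightarrow> c \<in> vecs (d v) \<Longrightarrow> mul v (\<lambda>p. 0) c = 0"
  using fd_zero_left[OF fd] by (simp add: zero_fun_def)

lemma P_LamE: assumes l: "l \<in> V" and x: "x \<in> LamE" shows "P l x \<in> LamE"
proof -
  obtain f where f: "f \<in> Lam" "x = gmul f (gincl d i e)" using x unfolding gpa_proj_def by blast
  have "P l x = gmul (P l f) (gincl d i e)"
  proof (rule ext)
    fix w :: "nat \<times> nat list \<times> nat list"
    obtain v bs js where wd: "w = (v, bs, js)" by (cases w) auto
    have x': "x \<in> Lam" using LamE_Lam[OF x] .
    show "P l x w = gmul (P l f) (gincl d i e) w"
    proof (cases "v = l")
      case True
      have "P l f (v, bs, butlast js @ [p]) = f (v, bs, butlast js @ [p])" for p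
        using Pl[OF l f(1)] True by simp
      then show ?thesis
        using Pl[OF l x', of v bs js] mult_incl_right[OF iV eV f(1), of v bs js]
          mult_incl_right[OF iV eV gmul_Lam, of "gincl d l (one l)" f v bs js] True wd f(2) by simp
    next
      case False
      have "P l f (v, bs, butlast js @ [p]) = 0" for p
        using Pl[OF l f(1)] False by simp
      then show ?thesis
        using Pl[OF l x', of v bs js] mult_incl_right[OF iV eV gmul_Lam, of "gincl d l (one l)" f v bs js]
          False wd mul_zero_fun[OF iV eV] by simp
    qed
  qed
  then show ?thesis using gmul_Lam unfolding gpa_proj_def by blast
qed

lemma P_add: assumes l: "l \<in> V" and x: "x \<in> Lam" "y \<in> Lam" shows "P l (x + y) = P l x + P l y"
proof (rule ext)
  fix w :: "nat \<times> nat list \<times> nat list"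
  obtain v bs js where wd: "w = (v, bs, js)" by (cases w) auto
  show "P l (x + y) w = (P l x + P l y) w"
    using Pl[OF l x(1)] Pl[OF l x(2)] Pl[OF l Lam_add[OF x]] wd by simp
qed

lemma P_sc: assumes l: "l \<in> V" and x: "x \<in> Lam" shows "P l (sc c x) = sc c (P l x)"
proof (rule ext)
  fix w :: "nat \<times> nat list \<times> nat list"
  obtain v bs js where wd: "w = (v, bs, js)" by (cases w) auto
  show "P l (sc c x) w = sc c (P l x) w"
    using Pl[OF l x(1)] Pl[OF l Lam_sc[OF x]] wd by simp
qed

lemma P_idem: assumes l: "l \<in> V" and x: "x \<in> Lam" shows "P l (P l x) = P l x"
proof (rule ext)
  fix w :: "nat \<times> nat list \<times> nat list"
  obtain v bs js where wd: "w = (v, bs, js)" by (cases w) auto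
  show "P l (P l x) w = P l x w"
    using Pl[OF l x(1)] Pl[OF l gmul_Lam] wd by simp
qed

lemma psi_app: "x \<in> LamE \<Longrightarrow> psi l \<phi> x = \<phi> (P l x)"
  by (simp add: dact_def)

lemma psi_out: "x \<notin> LamE \<Longrightarrow> psi l \<phi> x = 0"
  by (simp add: dact_def)

lemma psi_dual: assumes l: "l \<in> V" and \<phi>: "\<phi> \<in> dual LamE" shows "psi l \<phi> \<in> dual LamE"
  unfolding dual_def
proof (intro CollectI conjI ballI allI impI)
  fix x y assume xy: "x \<in> LamE" "y \<in> LamE"
  have s: "x + y \<in> LamE" using LamE_subspace xy by (simp add: fv.subspace_def)
  have "P l (x + y) = P l x + P l y" using P_add[OF l LamE_Lam LamE_Lam] xy by blast
  then show "psi l \<phi> (x + y) = psi l \<phi> x + psi l \<phi> y"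
    using psi_app[OF s] psi_app[OF xy(1)] psi_app[OF xy(2)] \<phi> P_LamE[OF l xy(1)] P_LamE[OF l xy(2)]
    unfolding dual_def by simp
next
  fix c x assume x: "x \<in> LamE"
  have s: "sc c x \<in> LamE" using LamE_subspace x by (simp add: fv.subspace_def)
  have "P l (sc c x) = sc c (P l x)" using P_sc[OF l LamE_Lam[OF x]] .
  then show "psi l \<phi> (sc c x) = c * psi l \<phi> x"
    using psi_app[OF s] psi_app[OF x] \<phi> P_LamE[OF l x] unfolding dual_def by simp
next
  fix x assume "x \<notin> LamE" then show "psi l \<phi> x = 0" by (rule psi_out)
qed


lemma slice0_gincl: assumes "y \<in> vecs (d v)" shows "(\<lambda>q. gincl d v y (v, [], [q])) = y"
proof
  fix q show "gincl d v y (v, [], [q]) = y q" using assms by (simp add: gincl_def vecs_def)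
qed

lemma acyc_self: "qp v bs \<Longrightarrow> pend tgt v bs = v \<Longrightarrow> bs = []"
  using acyc unfolding acyclic_quiver_def by blast

lemma incl_S_LamE: assumes y: "y \<in> S" shows "gincl d i y \<in> LamE"
proof -
  obtain c where c: "c \<in> vecs (d i)" "y = mul i c e" using y unfolding left_ideal_def by blast
  have yv: "y \<in> vecs (d i)" using y S_vecs by blast
  have "gincl d i y = gmul (gincl d i c) (gincl d i e)"
  proof (rule ext)
    fix w :: "nat \<times> nat list \<times> nat list"
    obtain v bs js where wd: "w = (v, bs, js)" by (cases w) auto
    note R = mult_incl_right[OF iV eV gincl_Lam[OF iV], of c v bs js]
    show "gincl d i y w = gmul (gincl d i c) (gincl d i e) w"
    proof (cases "(v, bs, js) \<in> G \<and> pend tgt v bs = i")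
      case True
      note g = G_D[OF conjunct1[OF True]]
      show ?thesis
      proof (cases "bs = []")
        case bs: True
        then have vi: "v = i" using True by (simp add: pend_def pvert_def)
        obtain q0 where js: "js = [q0]" using g(2) bs by (cases js) auto
        have hd: "q0 < d i" using g(3)[of 0] js bs vi by (simp add: pvert_def)
        have sl: "(\<lambda>p. gincl d i c (v, bs, butlast js @ [p])) = c"
          using js bs vi slice0_gincl[OF c(1)] by simp
        show ?thesis using R True sl wd bs vi js hd c(2) by (simp add: gincl_def)
      next
        case bs: False
        have sl: "(\<lambda>p. gincl d i c (v, bs, butlast js @ [p])) = (\<lambda>p. 0)"
          using bs by (simp add: gincl_def)
        show ?thesis using R True sl wd bs mul_zero_fun[OF iV eV] by (simp add: gincl_def)
      qed
    next
      case False
      have "gincl d i y w = 0"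
      proof (rule ccontr)
        assume nz: "gincl d i y w \<noteq> 0"
        then have cc: "v = i" "bs = []" "length js = 1" "hd js < d i" by (auto simp: gincl_def wd split: if_splits)
        then have "js = [hd js]" by (cases js) auto
        then have "(v, bs, js) \<in> G" using triv_G[OF iV cc(4)] cc by metis
        moreover have "pend tgt v bs = i" using cc by (simp add: pend_def pvert_def)
        ultimately show False using False by blast
      qed
      then show ?thesis using R False wd by simp
    qed
  qed
  then show ?thesis using gincl_Lam[OF iV] unfolding gpa_proj_def by blast
qed

lemma slice0_S: assumes x: "x \<in> LamE" shows "(\<lambda>q. x (i, [], [q])) \<in> S"
proof (cases "d i = 0")
  case True
  have "(\<lambda>q. x (i, [], [q])) = 0"
  proof
    fix q show "x (i, [], [q]) = 0 q"
      using LamE_nz[OF x, of i "[]" "[q]"] G_D(3)[of i "[]" "[q]" 0] True by (auto simp: pvert_def)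
  qed
  then show ?thesis using S_subspace by (simp add: fv.subspace_def)
next
  case False
  then have "(i, [], [] @ [0]) \<in> G" using triv_G[OF iV] by simp
  moreover have "pend tgt i [] = i" by (simp add: pend_def pvert_def)
  ultimately show ?thesis using LamE_slice_S[OF x, of i "[]" "[]" 0] by simp
qed

lemma Pi_LamE: assumes x: "x \<in> LamE" shows "P i x = gincl d i (\<lambda>q. x (i, [], [q]))"
proof (rule ext)
  fix w :: "nat \<times> nat list \<times> nat list"
  obtain v bs js where wd: "w = (v, bs, js)" by (cases w) auto
  have x': "x \<in> Lam" using LamE_Lam[OF x] .
  show "P i x w = gincl d i (\<lambda>q. x (i, [], [q])) w"
  proof (cases "v = i \<and> bs = [] \<and> length js = 1 \<and> hd js < d i")
    case True
    then have "js = [hd js]" by (cases js) auto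
    then show ?thesis using Pl[OF iV x', of v bs js] True wd by (simp add: gincl_def)
  next
    case False
    have "x (v, bs, js) = 0" if vi: "v = i"
    proof (rule ccontr)
      assume "x (v, bs, js) \<noteq> 0"
      then have w: "(v, bs, js) \<in> G" "pend tgt v bs = i" using LamE_nz[OF x] by auto
      then have "bs = []" using acyc_self[OF G_D(1)[OF w(1)]] w(2) vi by simp
      moreover then have "length js = 1" using G_D(2)[OF w(1)] by simp
      moreover have "hd js < d i" using G_D(3)[OF w(1), of 0] G_D(2)[OF w(1)] vi
        by (cases js) (auto simp: pvert_def)
      ultimately show False using False vi by blast
    qed
    then show ?thesis using Pl[OF iV x', of v bs js] False wd by (auto simp: gincl_def)
  qed
qed

lemma gincl_mul: assumes v: "v \<in> V" and a: "a \<in> vecs (d v)" and y: "y \<in> vecs (d v)"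
  shows "gmul (gincl d v a) (gincl d v y) = gincl d v (mul v a y)"
proof (rule ext)
  fix w :: "nat \<times> nat list \<times> nat list"
  obtain v' bs js where wd: "w = (v', bs, js)" by (cases w) auto
  note L = mult_incl_left[OF v a gincl_Lam[OF v], of y v' bs js]
  have my: "mul v a y \<in> vecs (d v)" using fd_closed[OF fd[OF v] a y] .
  show "gmul (gincl d v a) (gincl d v y) w = gincl d v (mul v a y) w"
  proof (cases "(v', bs, js) \<in> G \<and> v' = v")
    case True
    note g = G_D[OF conjunct1[OF True]]
    show ?thesis
    proof (cases "bs = []")
      case bs: True
      obtain q0 where js: "js = [q0]" using g(2) bs by (cases js) auto
      have hd: "q0 < d v" using g(3)[of 0] js bs True by (simp add: pvert_def)
      have sl: "(\<lambda>q. gincl d v y (v, bs, q # tl js)) = y"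
        using js bs slice0_gincl[OF y] by simp
      have vv: "v' = v" using True by simp
      have wG: "(v, bs, js) \<in> G" using True vv by simp
      have "gmul (gincl d v a) (gincl d v y) w = mul v a y q0"
        using L wG sl unfolding wd vv js by simp
      moreover have "gincl d v (mul v a y) w = mul v a y q0"
        unfolding wd vv js bs using hd by (simp add: gincl_def)
      ultimately show ?thesis by simp
    next
      case bs: False
      have vv: "v' = v" using True by simp
      have wG: "(v, bs, js) \<in> G" using True vv by simp
      have sl: "(\<lambda>q. gincl d v y (v, bs, q # tl js)) = 0"
        using bs by (simp add: gincl_def zero_fun_def)
      have "gmul (gincl d v a) (gincl d v y) w = 0"
        using L wG sl fd_zero_right[OF fd[OF v] a] unfolding wd vv by simp
      moreover have "gincl d v (mul v a y) w = 0"
        unfolding wd using bs by (simp add: gincl_def)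
      ultimately show ?thesis by simp
    qed
  next
    case False
    have "gincl d v (mul v a y) w = 0"
    proof (rule ccontr)
      assume nz: "gincl d v (mul v a y) w \<noteq> 0"
      then have cc: "v' = v" "bs = []" "length js = 1" "hd js < d v" by (auto simp: gincl_def wd split: if_splits)
      then have "js = [hd js]" by (cases js) auto
      then have "(v', bs, js) \<in> G" using triv_G[OF v cc(4)] cc by metis
      then show False using False cc by blast
    qed
    then show ?thesis using L False wd by simp
  qed
qed


lemma S_mul: assumes a: "a \<in> vecs (d i)" and y: "y \<in> S" shows "mul i a y \<in> S"
proof -
  obtain c where c: "c \<in> vecs (d i)" "y = mul i c e" using y unfolding left_ideal_def by blast
  have "mul i a y = mul i (mul i a c) e" using fd[OF iV] a c eV unfolding fd_alg_def by simp
  moreover have "mul i a c \<in> vecs (d i)" using fd_closed[OF fd[OF iV] a c(1)] .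
  ultimately show ?thesis unfolding left_ideal_def by blast
qed

lemma gincl_add: fixes y :: "nat \<Rightarrow> 'k" shows "gincl d v (y + y') = gincl d v y + gincl d v y'"
  by (rule ext) (auto simp: gincl_def)

lemma gincl_sc: fixes y :: "nat \<Rightarrow> 'k" shows "gincl d v (sc c y) = sc c (gincl d v y)"
  by (rule ext) (auto simp: gincl_def)

lemma rep_space_eq: "rep_space V E src tgt d mul one i e l = psi l ` dual LamE"
  by (simp add: rep_space_def inj_act_def)

lemma rep_act_eq: "rep_act V E src tgt d mul i e l x a = dact LamE gmul x (gincl d l a)"
  by (simp add: rep_act_def inj_act_def)

definition F1 :: "(((nat \<times> nat list \<times> nat list) \<Rightarrow> 'k) \<Rightarrow> 'k) \<Rightarrow> (nat \<Rightarrow> 'k) \<Rightarrow> 'k" where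
  "F1 \<psi> = (\<lambda>y. if y \<in> S then \<psi> (gincl d i y) else 0)"

lemma F1_psi: assumes \<phi>: "\<phi> \<in> dual LamE" and y: "y \<in> S" shows "F1 (psi i \<phi>) y = \<phi> (gincl d i y)"
proof -
  have yv: "y \<in> vecs (d i)" using y S_vecs by blast
  have "P i (gincl d i y) = gincl d i y"
    using Pi_LamE[OF incl_S_LamE[OF y]] slice0_gincl[OF yv] by simp
  then show ?thesis using y incl_S_LamE[OF y] by (simp add: F1_def psi_app)
qed

lemma F1_key: assumes \<phi>: "\<phi> \<in> dual LamE" and x: "x \<in> LamE"
  shows "psi i \<phi> x = F1 (psi i \<phi>) (\<lambda>q. x (i, [], [q]))"
  using F1_psi[OF \<phi> slice0_S[OF x]] psi_app[OF x] Pi_LamE[OF x] by simp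

theorem claim1:
  "rmod_iso (vecs (d i)) (rep_space V E src tgt d mul one i e i) (rep_act V E src tgt d mul i e i) sc
     (dual S) (dact S (mul i)) sc"
  unfolding rmod_iso_def rep_space_eq
proof (intro exI[of _ F1] conjI ballI allI)
  show "bij_betw F1 (psi i ` dual LamE) (dual S)"
    unfolding bij_betw_def
  proof
    show "inj_on F1 (psi i ` dual LamE)"
    proof (rule inj_onI)
      fix x y assume "x \<in> psi i ` dual LamE" "y \<in> psi i ` dual LamE" and eq: "F1 x = F1 y"
      then obtain \<phi> \<phi>' where ph: "\<phi> \<in> dual LamE" "\<phi>' \<in> dual LamE" "x = psi i \<phi>" "y = psi i \<phi>'" by blast
      show "x = y"
      proof (rule ext)
        fix z :: "(nat \<times> nat list \<times> nat list) \<Rightarrow> 'k"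
        show "x z = y z"
        proof (cases "z \<in> LamE")
          case True
          then show ?thesis using F1_key[OF ph(1) True] F1_key[OF ph(2) True] eq ph by simp
        next
          case False
          then show ?thesis using ph psi_out by simp
        qed
      qed
    qed
    show "F1 ` psi i ` dual LamE = dual S"
    proof
      show "F1 ` psi i ` dual LamE \<subseteq> dual S"
      proof safe
        fix \<phi> assume ph: "\<phi> \<in> dual LamE"
        show "F1 (psi i \<phi>) \<in> dual S" unfolding dual_def
        proof (intro CollectI conjI ballI allI impI)
          fix y y' assume yy: "y \<in> S" "y' \<in> S"
          have s: "y + y' \<in> S" using S_subspace yy by (simp add: fv.subspace_def)
          show "F1 (psi i \<phi>) (y + y') = F1 (psi i \<phi>) y + F1 (psi i \<phi>) y'"
            using F1_psi[OF ph s] F1_psi[OF ph yy(1)] F1_psi[OF ph yy(2)] gincl_add[of i y y']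
              incl_S_LamE[OF yy(1)] incl_S_LamE[OF yy(2)] ph unfolding dual_def by simp
        next
          fix c y assume y: "y \<in> S"
          have s: "sc c y \<in> S" using S_subspace y by (simp add: fv.subspace_def)
          show "F1 (psi i \<phi>) (sc c y) = c * F1 (psi i \<phi>) y"
            using F1_psi[OF ph s] F1_psi[OF ph y] gincl_sc[of i c y]
              incl_S_LamE[OF y] ph unfolding dual_def by simp
        next
          fix y assume "y \<notin> S" then show "F1 (psi i \<phi>) y = 0" by (simp add: F1_def)
        qed
      qed
    next
      show "dual S \<subseteq> F1 ` psi i ` dual LamE"
      proof
        fix \<Phi> assume Ph: "\<Phi> \<in> dual S"
        define \<phi> where "\<phi> = (\<lambda>x. if x \<in> LamE then \<Phi> (\<lambda>q. x (i, [], [q])) else 0)"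
        have ph: "\<phi> \<in> dual LamE" unfolding dual_def
        proof (intro CollectI conjI ballI allI impI)
          fix x y assume xy: "x \<in> LamE" "y \<in> LamE"
          have s: "x + y \<in> LamE" using LamE_subspace xy by (simp add: fv.subspace_def)
          have "(\<lambda>q. (x + y) (i, [], [q])) = (\<lambda>q. x (i, [], [q])) + (\<lambda>q. y (i, [], [q]))" by (rule ext) simp
          then show "\<phi> (x + y) = \<phi> x + \<phi> y"
            using s xy slice0_S[OF xy(1)] slice0_S[OF xy(2)] Ph unfolding \<phi>_def dual_def by simp
        next
          fix c x assume x: "x \<in> LamE"
          have s: "sc c x \<in> LamE" using LamE_subspace x by (simp add: fv.subspace_def)
          have "(\<lambda>q. (sc c x) (i, [], [q])) = sc c (\<lambda>q. x (i, [], [q]))" by (rule ext) simp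
          then show "\<phi> (sc c x) = c * \<phi> x"
            using s x slice0_S[OF x] Ph unfolding \<phi>_def dual_def by simp
        next
          fix x assume "x \<notin> LamE" then show "\<phi> x = 0" by (simp add: \<phi>_def)
        qed
        have "F1 (psi i \<phi>) = \<Phi>"
        proof
          fix y :: "nat \<Rightarrow> 'k"
          show "F1 (psi i \<phi>) y = \<Phi> y"
          proof (cases "y \<in> S")
            case True
            have yv: "y \<in> vecs (d i)" using True S_vecs by blast
            show ?thesis using F1_psi[OF ph True] incl_S_LamE[OF True] slice0_gincl[OF yv]
              by (simp add: \<phi>_def)
          next
            case False
            then show ?thesis using Ph by (simp add: F1_def dual_def)
          qed
        qed
        then show "\<Phi> \<in> F1 ` psi i ` dual LamE" using ph by blast
      qed
    qed
  qed
next
  fix x y assume "x \<in> psi i ` dual LamE" "y \<in> psi i ` dual LamE"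
  show "F1 (x + y) = F1 x + F1 y" by (rule ext) (simp add: F1_def)
next
  fix c x assume "x \<in> psi i ` dual LamE"
  show "F1 (sc c x) = sc c (F1 x)" by (rule ext) (simp add: F1_def)
next
  fix x and a :: "nat \<Rightarrow> 'k" assume x: "x \<in> psi i ` dual LamE" and a: "a \<in> vecs (d i)"
  show "F1 (rep_act V E src tgt d mul i e i x a) = dact S (mul i) (F1 x) a"
  proof
    fix y :: "nat \<Rightarrow> 'k"
    show "F1 (rep_act V E src tgt d mul i e i x a) y = dact S (mul i) (F1 x) a y"
    proof (cases "y \<in> S")
      case True
      have yv: "y \<in> vecs (d i)" using True S_vecs by blast
      have m: "mul i a y \<in> S" using S_mul[OF a True] .
      show ?thesis using True m incl_S_LamE[OF True] gincl_mul[OF iV a yv]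
        by (simp add: F1_def rep_act_eq dact_def)
    next
      case False
      then show ?thesis by (simp add: F1_def dact_def)
    qed
  qed
qed


theorem claim3:
  assumes l: "l \<in> V" and np: "\<not> (\<exists>as. qp l as \<and> pend tgt l as = i)"
  shows "rep_space V E src tgt d mul one i e l = {0}"
proof -
  have P0: "P l x = 0" if x: "x \<in> LamE" for x
  proof (rule ext)
    fix w :: "nat \<times> nat list \<times> nat list"
    obtain v bs js where wd: "w = (v, bs, js)" by (cases w) auto
    have "x (v, bs, js) = 0" if "v = l"
    proof (rule ccontr)
      assume "x (v, bs, js) \<noteq> 0"
      then have "(v, bs, js) \<in> G" "pend tgt v bs = i" using LamE_nz[OF x] by auto
      then show False using np G_D(1) that by blast
    qed
    then show "P l x w = 0 w" using Pl[OF l LamE_Lam[OF x], of v bs js] wd by simp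
  qed
  have z: "psi l \<phi> = 0" if ph: "\<phi> \<in> dual LamE" for \<phi>
  proof (rule ext)
    fix x :: "(nat \<times> nat list \<times> nat list) \<Rightarrow> 'k"
    show "psi l \<phi> x = 0 x"
    proof (cases "x \<in> LamE")
      case True
      then show ?thesis using psi_app[OF True] P0[OF True] dual_zero[OF LamE_subspace ph] by simp
    qed (simp add: psi_out)
  qed
  have "(0 :: ((nat \<times> nat list \<times> nat list) \<Rightarrow> 'k) \<Rightarrow> 'k) \<in> dual LamE"
    by (simp add: dual_def)
  then show ?thesis unfolding rep_space_eq using z by force
qed

end

lemma card_bounded_lists:
  "card {t. length t = n \<and> (\<forall>m<n. t ! m < f m)} = (\<Prod>m<n. f m)"
proof (induction n arbitrary: f)
  case 0
  have "{t. length t = 0 \<and> (\<forall>m<0. t ! m < f m)} = {[]}" by auto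
  then show ?case by simp
next
  case (Suc n)
  let ?T = "{t. length t = n \<and> (\<forall>m<n. t ! m < f (Suc m))}"
  have eq: "{t. length t = Suc n \<and> (\<forall>m<Suc n. t ! m < f m)} = (\<lambda>(x, t). x # t) ` ({..<f 0} \<times> ?T)"
  proof (rule set_eqI)
    fix t :: "nat list"
    show "t \<in> {t. length t = Suc n \<and> (\<forall>m<Suc n. t ! m < f m)} \<longleftrightarrow> t \<in> (\<lambda>(x, t). x # t) ` ({..<f 0} \<times> ?T)"
    proof
      assume t: "t \<in> {t. length t = Suc n \<and> (\<forall>m<Suc n. t ! m < f m)}"
      then obtain x t' where xt: "t = x # t'" by (cases t) auto
      have "x < f 0" using t xt by auto
      moreover have "t' \<in> ?T" using t xt by auto
      ultimately show "t \<in> (\<lambda>(x, t). x # t) ` ({..<f 0} \<times> ?T)" using xt by force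
    next
      assume "t \<in> (\<lambda>(x, t). x # t) ` ({..<f 0} \<times> ?T)"
      then obtain x t' where xt: "t = x # t'" "x < f 0" "t' \<in> ?T" by auto
      show "t \<in> {t. length t = Suc n \<and> (\<forall>m<Suc n. t ! m < f m)}"
      proof (intro CollectI conjI allI impI)
        show "length t = Suc n" using xt by simp
        fix m assume "m < Suc n"
        then show "t ! m < f m" using xt by (cases m) auto
      qed
    qed
  qed
  have inj: "inj_on (\<lambda>(x, t). x # t) ({..<f 0} \<times> ?T)" by (auto simp: inj_on_def)
  have "card {t. length t = Suc n \<and> (\<forall>m<Suc n. t ! m < f m)} = f 0 * card ?T"
    unfolding eq by (simp add: card_image[OF inj] card_cartesian_product)
  also have "card ?T = (\<Prod>m<n. f (Suc m))" using Suc.IH[of "\<lambda>m. f (Suc m)"] by simp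
  also have "f 0 * (\<Prod>m<n. f (Suc m)) = (\<Prod>m<Suc n. f m)" by (rule prod.lessThan_Suc_shift[symmetric])
  finally show ?case .
qed

locale cctx = ictx V E src tgt d mul one i e
  for V E src tgt d and mul :: "nat \<Rightarrow> (nat \<Rightarrow> 'k::field) \<Rightarrow> (nat \<Rightarrow> 'k) \<Rightarrow> (nat \<Rightarrow> 'k)" and one i e +
  fixes l :: nat and bl :: "(nat \<Rightarrow> 'k) list"
  assumes lV: "l \<in> V" and li: "l \<noteq> i" and bl_dist: "distinct bl"
    and bl_ind: "fv.independent (set bl)" and bl_span: "fv.span (set bl) = S"
begin

definition "Pth = {as. qp l as \<and> as \<noteq> [] \<and> pend tgt l as = i}"
definition "Mid as = {t. length t = length as - 1 \<and> (\<forall>m<length t. t ! m < d (tgt (as ! m)))}"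
definition "Blk = {(as, t, k). as \<in> Pth \<and> t \<in> Mid as \<and> k < length bl}"

definition eltg :: "nat list \<Rightarrow> nat list \<Rightarrow> (nat \<Rightarrow> 'k) \<Rightarrow> (nat \<Rightarrow> 'k) \<Rightarrow> (nat \<times> nat list \<times> nat list) \<Rightarrow> 'k" where
  "eltg as t y z = (\<lambda>(v, bs, js). if v = l \<and> bs = as \<and> length js = Suc (length as) \<and> tl (butlast js) = t
      then y (hd js) * z (last js) else 0)"

definition elt :: "nat list \<times> nat list \<times> nat \<Rightarrow> (nat \<Rightarrow> 'k) \<Rightarrow> (nat \<times> nat list \<times> nat list) \<Rightarrow> 'k" where
  "elt b y = (case b of (as, t, k) \<Rightarrow> eltg as t y (bl ! k))"

definition crd :: "nat list \<times> nat list \<times> nat \<Rightarrow> ((nat \<times> nat list \<times> nat list) \<Rightarrow> 'k) \<Rightarrow> nat \<Rightarrow> 'k" where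
  "crd b x = (case b of (as, t, k) \<Rightarrow>
     (\<lambda>q. if q < d l then fv.representation (set bl) (\<lambda>r. x (l, as, q # t @ [r])) (bl ! k) else 0))"

lemma finPth: "finite Pth"
proof -
  have "Pth \<subseteq> {as. set as \<subseteq> E \<and> length as \<le> card V}"
    using path_len by (auto simp: Pth_def qpath_def less_imp_le)
  then show ?thesis using finite_lists_length_le[OF finE] finite_subset by blast
qed

lemma card_Mid: "card (Mid as) = (\<Prod>m<length as - 1. d (tgt (as ! m)))"
  unfolding Mid_def using card_bounded_lists[of "length as - 1" "\<lambda>m. d (tgt (as ! m))"]
  by (simp add: conj_commute cong: conj_cong)

lemma finMid: "finite (Mid as)"
proof -
  let ?M = "\<Sum>m<length as. d (tgt (as ! m))"
  have "Mid as \<subseteq> {t. set t \<subseteq> {..<?M} \<and> length t \<le> length as}"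
  proof
    fix t assume t: "t \<in> Mid as"
    show "t \<in> {t. set t \<subseteq> {..<?M} \<and> length t \<le> length as}"
    proof (intro CollectI conjI subsetI)
      show "length t \<le> length as" using t by (simp add: Mid_def)
      fix x assume "x \<in> set t"
      then obtain m where m: "m < length t" "t ! m = x" by (auto simp: in_set_conv_nth)
      have ml: "m < length as" using m t by (simp add: Mid_def)
      have "d (tgt (as ! m)) \<le> ?M" using ml by (intro member_le_sum) auto
      then show "x \<in> {..<?M}" using t m by (auto simp: Mid_def)
    qed
  qed
  then show ?thesis using finite_lists_length_le[of "{..<?M}"] finite_subset by blast
qed

lemma Blk_Sigma: "Blk = (SIGMA as:Pth. Mid as \<times> {..<length bl})"
  by (auto simp: Blk_def)

lemma finBlk: "finite Blk"
  unfolding Blk_Sigma using finPth finMid by auto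

lemma card_Blk: "card Blk = nmult V E src tgt d (length bl) l i"
proof -
  have "card Blk = (\<Sum>as\<in>Pth. card (Mid as \<times> {..<length bl}))"
    unfolding Blk_Sigma using finPth finMid by (simp add: card_SigmaI)
  also have "\<dots> = (\<Sum>as\<in>Pth. (\<Prod>m<length as - 1. d (tgt (as ! m))) * length bl)"
    by (simp add: card_cartesian_product card_Mid)
  finally show ?thesis by (simp add: nmult_def Pth_def)
qed

lemma Pth_D: "as \<in> Pth \<Longrightarrow> qp l as \<and> as \<noteq> [] \<and> pend tgt l as = i"
  by (simp add: Pth_def)

lemma word_in_G:
  assumes as: "as \<in> Pth" and t: "t \<in> Mid as" and q: "q < d l" and r: "r < d i"
  shows "(l, as, q # t @ [r]) \<in> G"
proof -
  note P = Pth_D[OF as]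
  have lt: "length t = length as - 1" and tb: "\<And>m. m < length t \<Longrightarrow> t ! m < d (tgt (as ! m))"
    using t by (auto simp: Mid_def)
  have len: "length (q # t @ [r]) = Suc (length as)" using lt P by (cases as) auto
  have b: "\<forall>m<length (q # t @ [r]). (q # t @ [r]) ! m < d (pvert tgt l as m)"
  proof (intro allI impI)
    fix m assume m: "m < length (q # t @ [r])"
    show "(q # t @ [r]) ! m < d (pvert tgt l as m)"
    proof (cases m)
      case 0 then show ?thesis using q by (simp add: pvert_def)
    next
      case (Suc m')
      show ?thesis
      proof (cases "m' < length t")
        case True
        then show ?thesis using Suc tb[OF True] by (simp add: nth_append pvert_def)
      next
        case False
        then have "m' = length t" using m Suc by simp
        then have "m = length as" using Suc lt P by (cases as) auto
        moreover have "(q # t @ [r]) ! m = r" using Suc \<open>m' = length t\<close> by simp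
        ultimately show ?thesis using r P by (simp add: pend_def)
      qed
    qed
  qed
  show ?thesis unfolding gwords_def using P len b by blast
qed

lemma word_decomp:
  assumes w: "(l, bs, js) \<in> G" and p: "pend tgt l bs = i"
  shows "bs \<in> Pth" "tl (butlast js) \<in> Mid bs" "js = hd js # tl (butlast js) @ [last js]"
    "hd js < d l" "last js < d i"
proof -
  note g = G_D[OF w]
  have bs: "bs \<noteq> []" using p li by (auto simp: pend_def pvert_def)
  show "bs \<in> Pth" using g(1) bs p by (simp add: Pth_def)
  have l2: "length js \<ge> 2" using g(2) bs by (cases bs) auto
  show js: "js = hd js # tl (butlast js) @ [last js]"
    using l2 by (cases js) auto
  show "hd js < d l" using g(3)[of 0] l2 by (cases js) (auto simp: pvert_def)
  have "js ! length bs = last js" using g(2) by (metis diff_Suc_1 last_conv_nth length_0_conv nat.simps(3))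
  then show "last js < d i" using g(3)[of "length bs"] g(2) p by (simp add: pend_def)
  show "tl (butlast js) \<in> Mid bs" unfolding Mid_def
  proof (intro CollectI conjI allI impI)
    show "length (tl (butlast js)) = length bs - 1" using g(2) by simp
    fix m assume m: "m < length (tl (butlast js))"
    have "tl (butlast js) ! m = js ! Suc m" using m by (simp add: nth_tl nth_butlast)
    moreover have "Suc m < length js" using m by simp
    ultimately show "tl (butlast js) ! m < d (tgt (bs ! m))"
      using g(3)[of "Suc m"] by (simp add: pvert_def)
  qed
qed

lemma bl_S: "k < length bl \<Longrightarrow> bl ! k \<in> S"
  using bl_span fv.span_superset[of "set bl"] nth_mem by blast

lemma bl_vecs: "k < length bl \<Longrightarrow> bl ! k \<in> vecs (d i)"
  using bl_S S_vecs by blast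

lemma eltg_js: "length js = Suc (length as) \<Longrightarrow> as \<noteq> [] \<Longrightarrow> js = hd js # tl (butlast js) @ [last js]"
  by (cases js) auto

lemma eltg_nz:
  assumes as: "as \<in> Pth" and t: "t \<in> Mid as" and y: "y \<in> vecs (d l)" and z: "z \<in> vecs (d i)"
    and nz: "eltg as t y z (v, bs, js) \<noteq> 0"
  shows "v = l" "bs = as" "tl (butlast js) = t" "length js = Suc (length as)" "(v, bs, js) \<in> G"
    "eltg as t y z (v, bs, js) = y (hd js) * z (last js)"
proof -
  have c: "v = l" "bs = as" "length js = Suc (length as)" "tl (butlast js) = t"
    using nz by (auto simp: eltg_def split: if_splits)
  then show "v = l" "bs = as" "tl (butlast js) = t" "length js = Suc (length as)" by auto
  show val: "eltg as t y z (v, bs, js) = y (hd js) * z (last js)" using c by (simp add: eltg_def)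
  have "y (hd js) \<noteq> 0" "z (last js) \<noteq> 0" using nz val by auto
  then have "hd js < d l" "last js < d i" using y z by (auto simp: vecs_def, meson not_le)+
  moreover have "js = hd js # t @ [last js]" using eltg_js[OF c(3)] Pth_D[OF as] c(4) by simp
  ultimately show "(v, bs, js) \<in> G" using word_in_G[OF as t] c by metis
qed

lemma eltg_Lam:
  assumes as: "as \<in> Pth" and t: "t \<in> Mid as" and y: "y \<in> vecs (d l)" and z: "z \<in> vecs (d i)"
  shows "eltg as t y z \<in> Lam"
  unfolding gpa_def
proof (intro CollectI allI impI)
  fix w assume w: "w \<notin> G"
  obtain v bs js where wd: "w = (v, bs, js)" by (cases w) auto
  show "eltg as t y z w = 0" using eltg_nz(5)[OF as t y z, of v bs js] w wd by blast
qed

lemma eltg_LamE: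
  assumes as: "as \<in> Pth" and t: "t \<in> Mid as" and y: "y \<in> vecs (d l)" and z: "z \<in> S"
  shows "eltg as t y z \<in> LamE"
proof -
  obtain c where c: "c \<in> vecs (d i)" "z = mul i c e" using z unfolding left_ideal_def by blast
  have zv: "z \<in> vecs (d i)" using z S_vecs by blast
  note L = eltg_Lam[OF as t y c(1)]
  have "eltg as t y z = gmul (eltg as t y c) (gincl d i e)"
  proof (rule ext)
    fix w :: "nat \<times> nat list \<times> nat list"
    obtain v bs js where wd: "w = (v, bs, js)" by (cases w) auto
    note R = mult_incl_right[OF iV eV L, of v bs js]
    show "eltg as t y z w = gmul (eltg as t y c) (gincl d i e) w"
    proof (cases "v = l \<and> bs = as \<and> length js = Suc (length as) \<and> tl (butlast js) = t")
      case True
      have ne: "as \<noteq> []" using Pth_D[OF as] by simp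
      have bj: "butlast js \<noteq> []" using True ne by (cases js) auto
      have sl: "(\<lambda>p. eltg as t y c (v, bs, butlast js @ [p])) = sc (y (hd js)) c"
      proof
        fix p
        have "hd (butlast js @ [p]) = hd js" using bj by (cases js) auto
        then show "eltg as t y c (v, bs, butlast js @ [p]) = sc (y (hd js)) c p"
          using True bj by (simp add: eltg_def)
      qed
      have m: "mul i (sc (y (hd js)) c) e = sc (y (hd js)) z"
        using fd_sc_left[OF fd[OF iV] c(1) eV] c(2) by simp
      show ?thesis
      proof (cases "(v, bs, js) \<in> G")
        case wG: True
        have "pend tgt v bs = i" using True Pth_D[OF as] by simp
        then show ?thesis using R wG sl m True wd by (simp add: eltg_def)
      next
        case False
        then show ?thesis using R wd eltg_Lam[OF as t y zv] lam_zero by simp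
      qed
    next
      case False
      have "eltg as t y z w = 0" using False wd by (auto simp: eltg_def)
      moreover have "gmul (eltg as t y c) (gincl d i e) w = 0"
      proof (cases "(v, bs, js) \<in> G")
        case wG: True
        have jne: "js \<noteq> []" using word_nonempty[OF wG] .
        have sl: "(\<lambda>p. eltg as t y c (v, bs, butlast js @ [p])) = (\<lambda>p. 0)"
        proof
          fix p
          have "length (butlast js @ [p]) = length js" "tl (butlast (butlast js @ [p])) = tl (butlast js)"
            using jne by auto
          then show "eltg as t y c (v, bs, butlast js @ [p]) = 0" using False by (auto simp: eltg_def)
        qed
        then show ?thesis using R wd mul_zero_fun[OF iV eV] by simp
      next
        case nG: False
        then show ?thesis using R wd by simp
      qed
      ultimately show ?thesis by simp
    qed
  qed
  then show ?thesis using L unfolding gpa_proj_def by blast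
qed

lemma eltg_left:
  assumes as: "as \<in> Pth" and t: "t \<in> Mid as" and y: "y \<in> vecs (d l)" and z: "z \<in> vecs (d i)"
    and a: "a \<in> vecs (d l)"
  shows "gmul (gincl d l a) (eltg as t y z) = eltg as t (mul l a y) z"
proof (rule ext)
  fix w :: "nat \<times> nat list \<times> nat list"
  obtain v bs js where wd: "w = (v, bs, js)" by (cases w) auto
  note L = mult_incl_left[OF lV a eltg_Lam[OF as t y z], of v bs js]
  have my: "mul l a y \<in> vecs (d l)" using fd_closed[OF fd[OF lV] a y] .
  have ne: "as \<noteq> []" using Pth_D[OF as] by simp
  show "gmul (gincl d l a) (eltg as t y z) w = eltg as t (mul l a y) z w"
  proof (cases "(v, bs, js) \<in> G \<and> v = l")
    case True
    have vl: "v = l" using True by simp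
    have wG: "(l, bs, js) \<in> G" using True by (simp add: vl)
    have jne: "js \<noteq> []" using word_nonempty True by blast
    let ?c = "bs = as \<and> length js = Suc (length as) \<and> tl (butlast js) = t"
    have sl: "(\<lambda>q. eltg as t y z (l, bs, q # tl js)) = (if ?c then sc (z (last js)) y else 0)"
    proof (cases "tl js = []")
      case True
      then have "\<not> ?c" using ne jne by (cases js) auto
      moreover have "eltg as t y z (l, bs, q # tl js) = 0" for q using True ne by (simp add: eltg_def)
      ultimately show ?thesis by (auto simp: fun_eq_iff)
    next
      case False
      have eq: "length (q # tl js) = length js" "tl (butlast (q # tl js)) = tl (butlast js)"
        "last (q # tl js) = last js" "hd (q # tl js) = q" for q
        using False jne by (cases js; auto simp: butlast_tl)+
      show ?thesis
      proof (rule ext)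
        fix q
        have "eltg as t y z (l, bs, q # tl js) = (if l = l \<and> bs = as \<and> length (q # tl js) = Suc (length as) \<and>
            tl (butlast (q # tl js)) = t then y (hd (q # tl js)) * z (last (q # tl js)) else 0)"
          by (simp only: eltg_def prod.case)
        also have "\<dots> = (if l = l \<and> ?c then y q * z (last js) else 0)"
          by (simp only: eq)
        also have "\<dots> = (if ?c then sc (z (last js)) y else 0) q"
          by (simp add: mult.commute)
        finally show "eltg as t y z (l, bs, q # tl js) = (if ?c then sc (z (last js)) y else 0) q" .
      qed
    qed
    show ?thesis
    proof (cases ?c)
      case c: True
      have "gmul (gincl d l a) (eltg as t y z) w = mul l a (sc (z (last js)) y) (hd js)"
        using L wG sl c unfolding wd vl by simp
      also have "\<dots> = z (last js) * mul l a y (hd js)" using fd_sc_right[OF fd[OF lV] a y] by simp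
      finally show ?thesis using c unfolding wd vl by (simp add: eltg_def mult.commute)
    next
      case c: False
      have "gmul (gincl d l a) (eltg as t y z) w = mul l a 0 (hd js)"
        using L wG sl c unfolding wd vl by simp
      also have "\<dots> = 0" using fd_zero_right[OF fd[OF lV] a] by simp
      finally show ?thesis using c unfolding wd vl by (auto simp: eltg_def)
    qed
  next
    case False
    have "eltg as t (mul l a y) z w = 0"
      using False eltg_nz(1,5)[OF as t my z, of v bs js] wd by blast
    then show ?thesis using L False wd by simp
  qed
qed

lemma P_eltg:
  assumes as: "as \<in> Pth" and t: "t \<in> Mid as" and y: "y \<in> vecs (d l)" and z: "z \<in> vecs (d i)"
  shows "P l (eltg as t y z) = eltg as t y z"
proof -
  have one: "one l \<in> vecs (d l)" using fd[OF lV] by (simp add: fd_alg_def)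
  have "mul l (one l) y = y" using fd[OF lV] y by (simp add: fd_alg_def)
  then show ?thesis using eltg_left[OF as t y z one] by simp
qed

lemma elt_Blk: "b \<in> Blk \<Longrightarrow> (\<exists>as t k. b = (as, t, k) \<and> as \<in> Pth \<and> t \<in> Mid as \<and> k < length bl)"
  by (auto simp: Blk_def)

lemma elt_LamE: "b \<in> Blk \<Longrightarrow> y \<in> vecs (d l) \<Longrightarrow> elt b y \<in> LamE"
  using elt_Blk eltg_LamE bl_S by (fastforce simp: elt_def)

lemma elt_left: "b \<in> Blk \<Longrightarrow> y \<in> vecs (d l) \<Longrightarrow> a \<in> vecs (d l) \<Longrightarrow>
    gmul (gincl d l a) (elt b y) = elt b (mul l a y)"
  using elt_Blk eltg_left bl_vecs by (fastforce simp: elt_def)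

lemma P_elt: "b \<in> Blk \<Longrightarrow> y \<in> vecs (d l) \<Longrightarrow> P l (elt b y) = elt b y"
  using elt_Blk P_eltg bl_vecs by (fastforce simp: elt_def)

lemma elt_add: "elt b (y + y') = elt b y + elt b y'"
  by (rule ext) (auto simp: elt_def eltg_def distrib_right split: prod.splits)

lemma elt_sc: "elt b (sc c y) = sc c (elt b y)"
  by (rule ext) (auto simp: elt_def eltg_def mult.assoc split: prod.splits)

lemma sum_bl: "sum f (set bl) = (\<Sum>k<length bl. f (bl ! k))"
proof -
  have "set bl = (!) bl ` {..<length bl}" by (auto simp: in_set_conv_nth)
  moreover have "inj_on ((!) bl) {..<length bl}" using inj_on_nth[OF bl_dist] by simp
  ultimately show ?thesis using sum.reindex by (metis comp_apply sum.cong)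
qed

lemma slice_S:
  assumes x: "x \<in> LamE" and as: "as \<in> Pth" and t: "t \<in> Mid as" and q: "q < d l"
  shows "(\<lambda>r. x (l, as, q # t @ [r])) \<in> S"
proof (cases "d i = 0")
  case True
  have "(\<lambda>r. x (l, as, q # t @ [r])) = 0"
  proof
    fix r
    show "x (l, as, q # t @ [r]) = 0 r"
    proof (rule ccontr)
      assume "x (l, as, q # t @ [r]) \<noteq> 0 r"
      then have "(l, as, q # t @ [r]) \<in> G" "pend tgt l as = i" using LamE_nz[OF x] by auto
      then have "last (q # t @ [r]) < d i" by (rule word_decomp(5))
      then show False using True by simp
    qed
  qed
  then show ?thesis using S_subspace by (simp add: fv.subspace_def)
next
  case False
  then have "(l, as, (q # t) @ [0]) \<in> G" using word_in_G[OF as t q] by simp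
  then show ?thesis using LamE_slice_S[OF x, of l as "q # t" 0] Pth_D[OF as] by simp
qed

lemma crd_vecs: "crd b x \<in> vecs (d l)"
  by (cases b) (auto simp: crd_def vecs_def)

lemma crd_add:
  assumes b: "b \<in> Blk" and x: "x \<in> LamE" "x' \<in> LamE"
  shows "crd b (x + x') = crd b x + crd b x'"
proof -
  obtain as t k where bd: "b = (as, t, k)" "as \<in> Pth" "t \<in> Mid as" "k < length bl" using elt_Blk[OF b] by blast
  show ?thesis
  proof (rule ext)
    fix q
    show "crd b (x + x') q = (crd b x + crd b x') q"
    proof (cases "q < d l")
      case True
      have s1: "(\<lambda>r. x (l, as, q # t @ [r])) \<in> fv.span (set bl)" using slice_S[OF x(1) bd(2,3) True] bl_span by simp
      have s2: "(\<lambda>r. x' (l, as, q # t @ [r])) \<in> fv.span (set bl)" using slice_S[OF x(2) bd(2,3) True] bl_span by simp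
      have "(\<lambda>r. (x + x') (l, as, q # t @ [r])) = (\<lambda>r. x (l, as, q # t @ [r])) + (\<lambda>r. x' (l, as, q # t @ [r]))"
        by (rule ext) simp
      then show ?thesis using fv.representation_add[OF bl_ind s2 s1] True bd(1) by (simp add: crd_def)
    next
      case False then show ?thesis using bd(1) by (simp add: crd_def)
    qed
  qed
qed

lemma crd_sc:
  assumes b: "b \<in> Blk" and x: "x \<in> LamE"
  shows "crd b (sc c x) = sc c (crd b x)"
proof -
  obtain as t k where bd: "b = (as, t, k)" "as \<in> Pth" "t \<in> Mid as" "k < length bl" using elt_Blk[OF b] by blast
  show ?thesis
  proof (rule ext)
    fix q
    show "crd b (sc c x) q = sc c (crd b x) q"
    proof (cases "q < d l")
      case True
      have s1: "(\<lambda>r. x (l, as, q # t @ [r])) \<in> fv.span (set bl)" using slice_S[OF x bd(2,3) True] bl_span by simp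
      have "(\<lambda>r. (sc c x) (l, as, q # t @ [r])) = sc c (\<lambda>r. x (l, as, q # t @ [r]))"
        by (rule ext) simp
      then show ?thesis using fv.representation_scale[OF bl_ind s1] True bd(1) by (simp add: crd_def)
    next
      case False then show ?thesis using bd(1) by (simp add: crd_def)
    qed
  qed
qed

lemma crd_elt:
  assumes b: "b \<in> Blk" and b': "b' \<in> Blk" and y: "y \<in> vecs (d l)"
  shows "crd b' (elt b y) = (if b' = b then y else 0)"
proof -
  obtain as t k where bd: "b = (as, t, k)" "as \<in> Pth" "t \<in> Mid as" "k < length bl" using elt_Blk[OF b] by blast
  obtain as' t' k' where bd': "b' = (as', t', k')" "as' \<in> Pth" "t' \<in> Mid as'" "k' < length bl" using elt_Blk[OF b'] by blast
  have lt': "length t' = length as' - 1" using bd'(3) by (simp add: Mid_def)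
  have ne': "as' \<noteq> []" using Pth_D[OF bd'(2)] by simp
  have sl: "(\<lambda>r. elt b y (l, as', q # t' @ [r])) = (if as' = as \<and> t' = t then sc (y q) (bl ! k) else 0)" for q
  proof (rule ext)
    fix r
    have "length (q # t' @ [r]) = Suc (length as')" using lt' ne' by (cases as') auto
    moreover have "tl (butlast (q # t' @ [r])) = t'" by simp
    ultimately show "elt b y (l, as', q # t' @ [r]) = (if as' = as \<and> t' = t then sc (y q) (bl ! k) else 0) r"
      using bd(1) by (auto simp: elt_def eltg_def)
  qed
  have bk: "bl ! k \<in> set bl" using bd(4) by simp
  have rep: "fv.representation (set bl) (bl ! k) (bl ! k') = (if k' = k then 1 else 0)"
    using fv.representation_basis[OF bl_ind bk] bd(4) bd'(4) nth_eq_iff_index_eq[OF bl_dist] by auto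
  show ?thesis
  proof (rule ext)
    fix q
    show "crd b' (elt b y) q = (if b' = b then y else 0) q"
    proof (cases "q < d l")
      case True
      show ?thesis
      proof (cases "as' = as \<and> t' = t")
        case True2: True
        have "fv.representation (set bl) (sc (y q) (bl ! k)) (bl ! k') = y q * (if k' = k then 1 else 0)"
          using fv.representation_scale[OF bl_ind fv.span_base[OF bk]] rep by simp
        then show ?thesis using True True2 sl[of q] bd(1) bd'(1) by (auto simp: crd_def)
      next
        case False
        then show ?thesis using True sl[of q] bd(1) bd'(1) fv.representation_zero[of "set bl"] by (auto simp: crd_def)
      qed
    next
      case False
      then show ?thesis using y bd(1) bd'(1) by (auto simp: crd_def vecs_def)
    qed
  qed
qed

lemma elt_nz:
  assumes b: "b \<in> Blk" and y: "y \<in> vecs (d l)" and nz: "elt b y (v, bs, js) \<noteq> 0"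
  shows "v = l \<and> (v, bs, js) \<in> G \<and> pend tgt v bs = i \<and> (\<exists>k. b = (bs, tl (butlast js), k))"
proof -
  obtain as t k where bd: "b = (as, t, k)" "as \<in> Pth" "t \<in> Mid as" "k < length bl" using elt_Blk[OF b] by blast
  have nz': "eltg as t y (bl ! k) (v, bs, js) \<noteq> 0" using nz bd(1) by (simp add: elt_def)
  note E = eltg_nz[OF bd(2,3) y bl_vecs[OF bd(4)] nz']
  show ?thesis using E bd Pth_D[OF bd(2)] by auto
qed

lemma decomp: assumes x: "x \<in> LamE" shows "P l x = (\<Sum>b\<in>Blk. elt b (crd b x))"
proof (rule ext)
  fix w :: "nat \<times> nat list \<times> nat list"
  obtain v bs js where wd: "w = (v, bs, js)" by (cases w) auto
  have x': "x \<in> Lam" using LamE_Lam[OF x] .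
  have cv: "crd b x \<in> vecs (d l)" for b by (rule crd_vecs)
  show "P l x w = (\<Sum>b\<in>Blk. elt b (crd b x)) w"
  proof (cases "v = l \<and> (v, bs, js) \<in> G \<and> pend tgt v bs = i")
    case True
    have vl: "v = l" using True by simp
    have wG: "(l, bs, js) \<in> G" and pe: "pend tgt l bs = i" using True by (simp_all add: vl)
    note WD = word_decomp[OF wG pe]
    let ?t0 = "tl (butlast js)"
    let ?sl = "\<lambda>r. x (l, bs, hd js # ?t0 @ [r])"
    have slS: "?sl \<in> fv.span (set bl)" using slice_S[OF x WD(1,2,4)] bl_span by simp
    have len: "length js = Suc (length bs)" using G_D(2)[OF wG] .
    have "(\<Sum>b\<in>Blk. elt b (crd b x)) w = (\<Sum>b\<in>Blk. elt b (crd b x) w)" by (simp add: sum_fun_apply)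
    also have "\<dots> = (\<Sum>k<length bl. elt (bs, ?t0, k) (crd (bs, ?t0, k) x) w)"
    proof (rule sum_reduce[OF finBlk])
      show "inj_on (\<lambda>k. (bs, ?t0, k)) {..<length bl}" by (auto simp: inj_on_def)
      show "(\<lambda>k. (bs, ?t0, k)) ` {..<length bl} \<subseteq> Blk" using WD(1,2) by (auto simp: Blk_def)
      fix b assume b: "b \<in> Blk" "b \<notin> (\<lambda>k. (bs, ?t0, k)) ` {..<length bl}"
      show "elt b (crd b x) w = 0"
      proof (rule ccontr)
        assume "elt b (crd b x) w \<noteq> 0"
        then obtain k where k: "b = (bs, ?t0, k)" using elt_nz[OF b(1) cv] wd by blast
        then have "k < length bl" using b(1) by (auto simp: Blk_def)
        then show False using b(2) k by blast
      qed
    qed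
    also have "\<dots> = (\<Sum>k<length bl. fv.representation (set bl) ?sl (bl ! k) * (bl ! k) (last js))"
    proof (rule sum.cong[OF refl])
      fix k assume "k \<in> {..<length bl}"
      show "elt (bs, ?t0, k) (crd (bs, ?t0, k) x) w = fv.representation (set bl) ?sl (bl ! k) * (bl ! k) (last js)"
        using len WD(4) wd vl by (simp add: elt_def eltg_def crd_def)
    qed
    also have "\<dots> = (\<Sum>b\<in>set bl. sc (fv.representation (set bl) ?sl b) b) (last js)"
      by (simp add: sum_fun_apply sum_bl)
    also have "\<dots> = ?sl (last js)"
      using fv.sum_representation_eq[OF bl_ind slS, of "set bl"] by simp
    also have "\<dots> = x w" using WD(3) wd vl by simp
    finally show ?thesis using Pl[OF lV x', of v bs js] wd vl by simp
  next
    case False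
    have "P l x w = 0"
    proof -
      have "x (v, bs, js) = 0" if "v = l" using LamE_nz[OF x, of v bs js] False that by blast
      then show ?thesis using Pl[OF lV x', of v bs js] wd by simp
    qed
    moreover have "(\<Sum>b\<in>Blk. elt b (crd b x)) w = 0"
    proof -
      have "elt b (crd b x) w = 0" if "b \<in> Blk" for b
        using elt_nz[OF that cv[of b], of v bs js] False wd by blast
      then show ?thesis by (simp add: sum_fun_apply)
    qed
    ultimately show ?thesis by simp
  qed
qed

lemma psi_elt: "\<phi> \<in> dual LamE \<Longrightarrow> b \<in> Blk \<Longrightarrow> y \<in> vecs (d l) \<Longrightarrow> psi l \<phi> (elt b y) = \<phi> (elt b y)"
  using psi_app[OF elt_LamE] P_elt by simp

theorem claim2:
  "rmod_iso (vecs (d l)) (rep_space V E src tgt d mul one i e l) (rep_act V E src tgt d mul i e l) sc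
     (dpow (d l) (card Blk)) (dpow_act (d l) (card Blk) (mul l)) dpow_sc"
proof -
  define N where "N = card Blk"
  obtain h where h: "bij_betw h {0..<N} Blk" using ex_bij_betw_nat_finite[OF finBlk] N_def by blast
  have hB: "m < N \<Longrightarrow> h m \<in> Blk" for m using h by (auto simp: bij_betw_def)
  have hinj: "m < N \<Longrightarrow> m' < N \<Longrightarrow> h m = h m' \<longleftrightarrow> m = m'" for m m'
    using h by (auto simp: bij_betw_def inj_on_def)
  define F where "F \<psi> = (\<lambda>m. if m < N then (\<lambda>y. if y \<in> vecs (d l) then \<psi> (elt (h m) y) else 0) else 0)"
    for \<psi> :: "((nat \<times> nat list \<times> nat list) \<Rightarrow> 'k) \<Rightarrow> 'k"
  have expand: "psi l \<phi> x = (\<Sum>m\<in>{0..<N}. F (psi l \<phi>) m (crd (h m) x))"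
    if ph: "\<phi> \<in> dual LamE" and x: "x \<in> LamE" for \<phi> x
  proof -
    have "psi l \<phi> x = \<phi> (\<Sum>b\<in>Blk. elt b (crd b x))" using psi_app[OF x] decomp[OF x] by simp
    also have "\<dots> = (\<Sum>b\<in>Blk. \<phi> (elt b (crd b x)))"
      by (rule dual_sum[OF LamE_subspace ph]) (rule elt_LamE[OF _ crd_vecs])
    also have "\<dots> = (\<Sum>m\<in>{0..<N}. \<phi> (elt (h m) (crd (h m) x)))"
      by (rule sum.reindex_bij_betw[OF h, symmetric])
    also have "\<dots> = (\<Sum>m\<in>{0..<N}. F (psi l \<phi>) m (crd (h m) x))"
      by (rule sum.cong[OF refl]) (simp add: F_def crd_vecs psi_elt[OF ph hB])
    finally show ?thesis .
  qed
  show ?thesis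
    unfolding rmod_iso_def rep_space_eq N_def[symmetric]
  proof (intro exI[of _ F] conjI ballI allI)
    show "bij_betw F (psi l ` dual LamE) (dpow (d l) N)"
      unfolding bij_betw_def
    proof
      show "inj_on F (psi l ` dual LamE)"
      proof (rule inj_onI)
        fix x y assume "x \<in> psi l ` dual LamE" "y \<in> psi l ` dual LamE" and eq: "F x = F y"
        then obtain \<phi> \<phi>' where ph: "\<phi> \<in> dual LamE" "\<phi>' \<in> dual LamE" "x = psi l \<phi>" "y = psi l \<phi>'" by blast
        show "x = y"
        proof (rule ext)
          fix z :: "(nat \<times> nat list \<times> nat list) \<Rightarrow> 'k"
          show "x z = y z"
          proof (cases "z \<in> LamE")
            case True
            then show ?thesis using expand[OF ph(1) True] expand[OF ph(2) True] eq ph by simp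
          next
            case False
            then show ?thesis using ph psi_out by simp
          qed
        qed
      qed
      show "F ` psi l ` dual LamE = dpow (d l) N"
      proof
        show "F ` psi l ` dual LamE \<subseteq> dpow (d l) N"
        proof safe
          fix \<phi> assume ph: "\<phi> \<in> dual LamE"
          have pd: "psi l \<phi> \<in> dual LamE" using psi_dual[OF lV ph] .
          have "F (psi l \<phi>) m \<in> dual (vecs (d l))" if m: "m < N" for m
            unfolding dual_def
          proof (intro CollectI conjI ballI allI impI)
            fix y y' :: "nat \<Rightarrow> 'k" assume yy: "y \<in> vecs (d l)" "y' \<in> vecs (d l)"
            have s: "y + y' \<in> vecs (d l)" using yy by (simp add: vecs_def)
            show "F (psi l \<phi>) m (y + y') = F (psi l \<phi>) m y + F (psi l \<phi>) m y'"
              using m s yy pd elt_LamE[OF hB[OF m] yy(1)] elt_LamE[OF hB[OF m] yy(2)]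
              by (simp add: F_def elt_add dual_def)
          next
            fix c and y :: "nat \<Rightarrow> 'k" assume y: "y \<in> vecs (d l)"
            have s: "sc c y \<in> vecs (d l)" using y by (rule vecs_sc)
            show "F (psi l \<phi>) m (sc c y) = c * F (psi l \<phi>) m y"
              using m s y pd elt_LamE[OF hB[OF m] y] by (simp add: F_def elt_sc dual_def)
          next
            fix y :: "nat \<Rightarrow> 'k" assume "y \<notin> vecs (d l)"
            then show "F (psi l \<phi>) m y = 0" by (simp add: F_def)
          qed
          then show "F (psi l \<phi>) \<in> dpow (d l) N" by (simp add: dpow_def F_def)
        qed
      next
        show "dpow (d l) N \<subseteq> F ` psi l ` dual LamE"
        proof
          fix \<Phi> :: "nat \<Rightarrow> (nat \<Rightarrow> 'k) \<Rightarrow> 'k" assume Ph: "\<Phi> \<in> dpow (d l) N"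
          have Pm: "m < N \<Longrightarrow> \<Phi> m \<in> dual (vecs (d l))" for m using Ph by (simp add: dpow_def)
          have Pz: "m \<ge> N \<Longrightarrow> \<Phi> m = 0" for m using Ph by (simp add: dpow_def)
          define \<phi> where "\<phi> = (\<lambda>x. if x \<in> LamE then (\<Sum>m\<in>{0..<N}. \<Phi> m (crd (h m) x)) else 0)"
          have ph: "\<phi> \<in> dual LamE" unfolding dual_def
          proof (intro CollectI conjI ballI allI impI)
            fix x y assume xy: "x \<in> LamE" "y \<in> LamE"
            have s: "x + y \<in> LamE" using LamE_subspace xy by (simp add: fv.subspace_def)
            have "\<Phi> m (crd (h m) (x + y)) = \<Phi> m (crd (h m) x) + \<Phi> m (crd (h m) y)" if m: "m \<in> {0..<N}" for m
              using crd_add[OF hB xy] Pm[of m] m crd_vecs by (auto simp: dual_def)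
            then show "\<phi> (x + y) = \<phi> x + \<phi> y"
              using s xy by (simp add: \<phi>_def sum.distrib)
          next
            fix c x assume x: "x \<in> LamE"
            have s: "sc c x \<in> LamE" using LamE_subspace x by (simp add: fv.subspace_def)
            have "\<Phi> m (crd (h m) (sc c x)) = c * \<Phi> m (crd (h m) x)" if m: "m \<in> {0..<N}" for m
              using crd_sc[OF hB x] Pm[of m] m crd_vecs by (auto simp: dual_def)
            then show "\<phi> (sc c x) = c * \<phi> x"
              using s x by (simp add: \<phi>_def sum_distrib_left)
          next
            fix x assume "x \<notin> LamE" then show "\<phi> x = 0" by (simp add: \<phi>_def)
          qed
          have "F (psi l \<phi>) = \<Phi>"
          proof (rule ext)
            fix m
            show "F (psi l \<phi>) m = \<Phi> m"
            proof (cases "m < N")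
              case m: True
              show ?thesis
              proof (rule ext)
                fix y :: "nat \<Rightarrow> 'k"
                show "F (psi l \<phi>) m y = \<Phi> m y"
                proof (cases "y \<in> vecs (d l)")
                  case y: True
                  have "F (psi l \<phi>) m y = \<phi> (elt (h m) y)"
                    using m y psi_elt[OF ph hB[OF m] y] by (simp add: F_def)
                  also have "\<dots> = (\<Sum>m'\<in>{0..<N}. \<Phi> m' (crd (h m') (elt (h m) y)))"
                    using elt_LamE[OF hB[OF m] y] by (simp add: \<phi>_def)
                  also have "\<dots> = (\<Sum>m'\<in>{0..<N}. if m' = m then \<Phi> m y else 0)"
                  proof (rule sum.cong[OF refl])
                    fix m' assume m': "m' \<in> {0..<N}"
                    have "crd (h m') (elt (h m) y) = (if m' = m then y else 0)"
                      using crd_elt[OF hB[OF m] hB y, of m'] m' m hinj[of m' m] by auto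
                    then show "\<Phi> m' (crd (h m') (elt (h m) y)) = (if m' = m then \<Phi> m y else 0)"
                      using dual_zero[OF vecs_subspace Pm[of m']] m' by auto
                  qed
                  also have "\<dots> = \<Phi> m y" using m by simp
                  finally show ?thesis .
                next
                  case False
                  then show ?thesis using m Pm[OF m] by (simp add: F_def dual_def)
                qed
              qed
            next
              case False
              then show ?thesis using Pz[of m] by (simp add: F_def)
            qed
          qed
          then show "\<Phi> \<in> F ` psi l ` dual LamE" using ph by blast
        qed
      qed
    qed
  next
    fix x y assume "x \<in> psi l ` dual LamE" "y \<in> psi l ` dual LamE"
    show "F (x + y) = F x + F y" by (rule ext)+ (simp add: F_def)
  next
    fix c x assume "x \<in> psi l ` dual LamE"
    show "F (sc c x) = dpow_sc c (F x)" by (rule ext)+ (simp add: F_def dpow_sc_def)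
  next
    fix x and a :: "nat \<Rightarrow> 'k" assume x: "x \<in> psi l ` dual LamE" and a: "a \<in> vecs (d l)"
    show "F (rep_act V E src tgt d mul i e l x a) = dpow_act (d l) N (mul l) (F x) a"
    proof (rule ext)+
      fix m and y :: "nat \<Rightarrow> 'k"
      show "F (rep_act V E src tgt d mul i e l x a) m y = dpow_act (d l) N (mul l) (F x) a m y"
      proof (cases "m < N \<and> y \<in> vecs (d l)")
        case True
        have my: "mul l a y \<in> vecs (d l)" using fd_closed[OF fd[OF lV] a] True by blast
        show ?thesis using True my elt_LamE[OF hB] elt_left[OF hB _ a]
          by (simp add: F_def rep_act_eq dact_def dpow_act_def)
      next
        case False
        then show ?thesis by (auto simp: F_def dpow_act_def dact_def)
      qed
    qed
  qed
qed

end

theorem proposition5p7: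
  fixes V E :: "nat set" and src tgt :: "nat \<Rightarrow> nat" and d :: "nat \<Rightarrow> nat"
    and mul :: "nat \<Rightarrow> (nat \<Rightarrow> 'k::field) \<Rightarrow> (nat \<Rightarrow> 'k) \<Rightarrow> (nat \<Rightarrow> 'k)"
    and one :: "nat \<Rightarrow> (nat \<Rightarrow> 'k)"
    and s :: "nat \<Rightarrow> nat" and e :: "nat \<Rightarrow> nat \<Rightarrow> (nat \<Rightarrow> 'k)"
    and i j :: nat
  assumes "alg_closed TYPE('k)"
    and "quiver V E src tgt" and "acyclic_quiver V E src tgt"
    and "\<forall>v\<in>V. fd_alg (d v) (mul v) (one v)"
    and "\<forall>v\<in>V. complete_prim_orth (d v) (mul v) (one v) (s v) (e v)"
    and "\<forall>v\<in>V. basic_alg (d v) (mul v) (s v) (e v)"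
    and "i \<in> V" and "1 \<le> j" and "j \<le> s i"
  shows "rmod_iso (vecs (d i))
           (rep_space V E src tgt d mul one i (e i j) i) (rep_act V E src tgt d mul i (e i j) i) sc
           (dual (left_ideal (d i) (mul i) (e i j))) (dact (left_ideal (d i) (mul i) (e i j)) (mul i)) sc
       \<and> (\<forall>l\<in>V. l \<noteq> i \<longrightarrow>
           rmod_iso (vecs (d l))
             (rep_space V E src tgt d mul one i (e i j) l) (rep_act V E src tgt d mul i (e i j) l) sc
             (dpow (d l) (nmult V E src tgt d (dimk (dual (left_ideal (d i) (mul i) (e i j)))) l i))
             (dpow_act (d l) (nmult V E src tgt d (dimk (dual (left_ideal (d i) (mul i) (e i j)))) l i) (mul l))
             dpow_sc)
       \<and> (\<forall>l\<in>V. l \<noteq> i \<and> \<not> (\<exists>as. qpath V E src tgt l as \<and> pend tgt l as = i) \<longrightarrow>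
           rep_space V E src tgt d mul one i (e i j) l = {0})"
proof -
  have ev: "e i j \<in> vecs (d i)"
    using assms(5,7,8,9) by (auto simp: complete_prim_orth_def prim_idem_def idem_def)
  interpret g: gctx V E src tgt d mul one
    by unfold_locales (use assms(2,3,4) in auto)
  interpret ic: ictx V E src tgt d mul one i "e i j"
    by unfold_locales (use assms(7) ev in auto)
  obtain B where B: "finite B" "fv.independent B" "fv.span B = ic.S"
    using fin_basis[OF ic.S_subspace ic.S_vecs] by blast
  obtain bl where bl: "set bl = B" "distinct bl" using finite_distinct_list[OF B(1)] by blast
  have dimI: "dimk (dual ic.S) = length bl"
    using dimk_dual[OF ic.S_subspace B] bl distinct_card by metis
  have c2: "rmod_iso (vecs (d l))
             (rep_space V E src tgt d mul one i (e i j) l) (rep_act V E src tgt d mul i (e i j) l) sc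
             (dpow (d l) (nmult V E src tgt d (dimk (dual (left_ideal (d i) (mul i) (e i j)))) l i))
             (dpow_act (d l) (nmult V E src tgt d (dimk (dual (left_ideal (d i) (mul i) (e i j)))) l i) (mul l))
             dpow_sc" if l: "l \<in> V" "l \<noteq> i" for l
  proof -
    interpret cc: cctx V E src tgt d mul one i "e i j" l bl
      by unfold_locales (use l bl B in auto)
    show ?thesis using cc.claim2 cc.card_Blk dimI by simp
  qed
  show ?thesis using ic.claim1 c2 ic.claim3 by blast
qed

end
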